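(* Let $0<H<1$, $1-H<\alpha<1$, let $B^H$ be a fractional Brownian motion, and for $0\le t_2<t_1$ put $X(\mathbf t)=\frac{B^H_{t_1}-B^H_{t_2}}{(t_1-t_2)^{1-\alpha}}+\int_{t_2}^{t_1}\frac{B^H_u-B^H_{t_2}}{(u-t_2)^{2-\alpha}}du$, $\mathbf t=(t_1,t_2)$. Then, with constants $C(H,\alpha)$ depending only on $H,\alpha$: 1) for all $0\le t_2<t_1$, $(EX(\mathbf t)^2)^{1/2}\le C(H,\alpha)(t_1-t_2)^{H+\alpha-1}$; 2)(a) if $H+\alpha\le\frac32$, then for all $0\le t_2<t_1$, $0\le s_2<s_1$ and every $0<\varepsilon<(H+\alpha-1)\wedge\frac12$, $(E|X(\mathbf t)-X(\mathbf s)|^2)^{1/2}\le C(H,\alpha)(1+\varepsilon^{-1})(|t_1-s_1|\vee|t_2-s_2|)^{H+\alpha-1-\varepsilon}(t_1\vee s_1)^\varepsilon$, with $C(H,\alpha)$ independent of $\varepsilon$ and of $\mathbf t,\mathbf s$; 2)(b) if $H+\alpha>\frac32$, then for all $0\le t_2<t_1$, $0\le s_2<s_1$, $(E|X(\mathbf t)-X(\mathbf s)|^2)^{1/2}\le C(H,\alpha)(|t_1-s_1|\vee|t_2-s_2|)^{1/2}(t_1\vee s_1)^{H+\alpha-\frac32}$.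
   Context: A fractional Brownian motion with Hurst index $H\in(0,1)$ is a centered Gaussian process $B^H$ with $B^H_0=0$ and $EB^H_tB^H_s=\frac12(t^{2H}+s^{2H}-|t-s|^{2H})$; its continuous modification is used. *)

theory Defs
  imports "HOL-Probability.Probability"
begin

definition centered_gaussian_rv :: "'a measure \<Rightarrow> ('a \<Rightarrow> real) \<Rightarrow> bool" where
  "centered_gaussian_rv M X \<longleftrightarrow>
     (AE \<omega> in M. X \<omega> = 0) \<or> (\<exists>\<sigma>>0. distributed M lborel X (normal_density 0 \<sigma>))"

definition fbm :: "'a measure \<Rightarrow> real \<Rightarrow> (real \<Rightarrow> 'a \<Rightarrow> real) \<Rightarrow> bool" where
  "fbm M H B \<longleftrightarrow>
     prob_space M \<and>
     (\<forall>t. B t \<in> borel_measurable M) \<and>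
     (AE \<omega> in M. B 0 \<omega> = 0) \<and>
     (\<forall>I c. finite I \<and> I \<subseteq> {0..} \<longrightarrow>
        centered_gaussian_rv M (\<lambda>\<omega>. \<Sum>t\<in>I. c t * B t \<omega>)) \<and>
     (\<forall>s t. 0 \<le> s \<and> 0 \<le> t \<longrightarrow>
        prob_space.expectation M (\<lambda>\<omega>. B t \<omega> * B s \<omega>)
          = (t powr (2*H) + s powr (2*H) - \<bar>t - s\<bar> powr (2*H)) / 2) \<and>
     (\<forall>\<omega>\<in>space M. continuous_on {0..} (\<lambda>t. B t \<omega>))"

definition fbm_X :: "real \<Rightarrow> (real \<Rightarrow> 'a \<Rightarrow> real) \<Rightarrow> real \<Rightarrow> real \<Rightarrow> 'a \<Rightarrow> real" where
  "fbm_X \<alpha> B t1 t2 \<omega> =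
     (B t1 \<omega> - B t2 \<omega>) / (t1 - t2) powr (1 - \<alpha>)
     + (LBINT u=t2..t1. (B u \<omega> - B t2 \<omega>) / (u - t2) powr (2 - \<alpha>))"

end

theory Submission imports Defs begin

lemma powr_diff_le:
  fixes x y \<beta> :: real
  assumes "0 < x" "x \<le> y" "0 < \<beta>"
  shows "x powr (-\<beta>) - y powr (-\<beta>) \<le> \<beta> * (y - x) * x powr (-\<beta> - 1)"
proof (cases "x = y")
  case True then show ?thesis by simp
next
  case False
  with assms have xy: "x < y" by simp
  have "\<exists>z>x. z < y \<and> (\<lambda>z. z powr (-\<beta>)) y - (\<lambda>z. z powr (-\<beta>)) x = (y - x) * (-\<beta> * z powr (-\<beta> - 1))"
    apply (rule MVT2[OF xy])
    using assms by (auto intro!: derivative_eq_intros simp: powr_diff)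
  then obtain z where z: "x < z" "z < y" "y powr (-\<beta>) - x powr (-\<beta>) = (y - x) * (-\<beta> * z powr (-\<beta> - 1))" by auto
  have "z powr (-\<beta> - 1) \<le> x powr (-\<beta> - 1)"
    using z assms by (intro powr_mono2') auto
  then have "\<beta> * (y - x) * z powr (-\<beta> - 1) \<le> \<beta> * (y - x) * x powr (-\<beta> - 1)"
    using assms xy by (intro mult_left_mono) auto
  then show ?thesis using z by (simp add: algebra_simps)
qed

lemma powr_int_0:
  fixes a b e :: real
  assumes "0 < e" "a < b"
  shows "(\<integral>\<^sup>+u. ennreal ((u - a) powr (e - 1)) * indicator {a<..<b} u \<partial>lborel) = ennreal ((b - a) powr e / e)"
proof -
  have c: "continuous_on {a..b} (\<lambda>u. (u - a) powr e / e)"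
    using assms by (intro continuous_on_divide continuous_on_powr' continuous_intros) auto
  have h1: "ereal a < ereal b" using assms by simp
  have h2: "DERIV (\<lambda>u. (u - a) powr e / e) x :> (x - a) powr (e - 1)"
    if x: "ereal a < ereal x" "ereal x < ereal b" for x
      using x assms by (auto intro!: derivative_eq_intros simp: powr_diff)
  have h3: "isCont (\<lambda>u. (u - a) powr (e - 1)) x" if x: "ereal a < ereal x" "ereal x < ereal b" for x
      using x by (auto intro!: continuous_intros)
  have h4: "AE x in lborel. ereal a < ereal x \<longrightarrow> ereal x < ereal b \<longrightarrow> 0 \<le> (x - a) powr (e - 1)"
      by auto
  have "((\<lambda>u. (u - a) powr e / e) \<longlongrightarrow> (a - a) powr e / e) (at_right a)"
      using c assms unfolding continuous_on_def
      by (metis (no_types, lifting) atLeastAtMost_iff dual_order.refl less_imp_le at_within_Icc_at_right )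
  then have h5: "(((\<lambda>u. (u - a) powr e / e) \<circ> real_of_ereal) \<longlongrightarrow> 0) (at_right (ereal a))"
      by (simp add: ereal_tendsto_simps)
  have "((\<lambda>u. (u - a) powr e / e) \<longlongrightarrow> (b - a) powr e / e) (at_left b)"
      using c assms unfolding continuous_on_def
      by (metis atLeastAtMost_iff at_within_Icc_at_left dual_order.refl less_imp_le)
  then have h6: "(((\<lambda>u. (u - a) powr e / e) \<circ> real_of_ereal) \<longlongrightarrow> (b - a) powr e / e) (at_left (ereal b))"
      by (simp add: ereal_tendsto_simps)
  note F = interval_integral_FTC_nonneg[OF h1 h2 h3 h4 h5 h6]
  have "(\<integral>\<^sup>+u. ennreal ((u - a) powr (e - 1)) * indicator {a<..<b} u \<partial>lborel)
      = (\<integral>\<^sup>+u. ennreal (indicator {a<..<b} u *\<^sub>R (u - a) powr (e - 1)) \<partial>lborel)"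
    by (intro nn_integral_cong) (auto split: split_indicator)
  also have "\<dots> = ennreal (\<integral>u. indicator {a<..<b} u *\<^sub>R (u - a) powr (e - 1) \<partial>lborel)"
    using F(1) by (intro nn_integral_eq_integral) (auto simp: set_integrable_def)
  also have "\<dots> = ennreal ((b - a) powr e / e)"
    using F(2) assms by (simp add: interval_integral_Ioo interval_integral_eq_integral set_lebesgue_integral_def)
  finally show ?thesis .
qed

lemma powr_int_tail:
  fixes d \<delta> e b :: real
  assumes "e < 1" "0 < \<delta>"
  shows "(\<integral>\<^sup>+u. ennreal ((u - d) powr (e - 2)) * indicator {d+\<delta>..<b} u \<partial>lborel) \<le> ennreal (\<delta> powr (e - 1) / (1 - e))"
proof -
  have "(\<integral>\<^sup>+u. ennreal ((u - d) powr (e - 2)) * indicator {d+\<delta>..<b} u \<partial>lborel)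
     \<le> (\<integral>\<^sup>+u. ennreal ((u - d) powr (e - 2)) * indicator {d+\<delta>..} u \<partial>lborel)"
    by (intro nn_integral_mono) (auto split: split_indicator)
  also have "\<dots> = ennreal (0 - (- ((d + \<delta> - d) powr (e - 1) / (1 - e))))"
  proof (rule nn_integral_FTC_atLeast)
    show "(\<lambda>u. (u - d) powr (e - 2)) \<in> borel_measurable borel" by measurable
    fix x assume x: "d + \<delta> \<le> x"
    show "DERIV (\<lambda>u. - ((u - d) powr (e - 1) / (1 - e))) x :> (x - d) powr (e - 2)"
    proof -
      have D1: "DERIV (\<lambda>u. (u - d) powr (e - 1)) x :> (e - 1) * (x - d) powr (e - 1 - 1)"
        using x assms by (auto intro!: derivative_eq_intros)
      have "DERIV (\<lambda>u. - ((u - d) powr (e - 1) / (1 - e))) x :> - ((e - 1) * (x - d) powr (e - 1 - 1) / (1 - e))"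
        by (rule DERIV_minus[OF DERIV_cdivide[OF D1]])
      moreover have "- ((e - 1) * (x - d) powr (e - 1 - 1) / (1 - e)) = (x - d) powr (e - 2)"
        using assms by (simp add: field_simps)
      ultimately show ?thesis by simp
    qed
  next
    fix x show "0 \<le> (x - d) powr (e - 2)" by simp
  next
    have "((\<lambda>u. (u - d) powr (e - 1)) \<longlongrightarrow> 0) at_top"
    proof (rule tendsto_neg_powr)
      show "e - 1 < 0" using assms by simp
      have "LIM u at_top. (- d) + u :> at_top"
        by (rule filterlim_tendsto_add_at_top[OF tendsto_const filterlim_ident])
      then show "LIM u at_top. u - d :> at_top" by simp
    qed
    from tendsto_minus[OF tendsto_divide_zero[OF this, of "1 - e"]]
    show "((\<lambda>u. - ((u - d) powr (e - 1) / (1 - e))) \<longlongrightarrow> 0) at_top"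
      by simp
  qed
  also have "\<dots> = ennreal (\<delta> powr (e - 1) / (1 - e))"
    using assms by simp
  finally show ?thesis .
qed

lemma ennreal_sq_le_imp_le:
  fixes x y :: ennreal
  assumes "x\<^sup>2 \<le> y\<^sup>2" shows "x \<le> y"
proof (cases "y = \<infinity>")
  case False
  then obtain r where r: "y = ennreal r" "0 \<le> r" by (cases y) auto
  show ?thesis
  proof (cases "x = \<infinity>")
    case False
    then obtain s where s: "x = ennreal s" "0 \<le> s" by (cases x) auto
    have "ennreal (s\<^sup>2) \<le> ennreal (r\<^sup>2)" using assms r s by (simp add: ennreal_power)
    then have "s\<^sup>2 \<le> r\<^sup>2" using r(2) by (auto simp: ennreal_le_iff2)
    then have "s \<le> r" using r(2) by (rule power2_le_imp_le)
    then show ?thesis using r s by (simp add: ennreal_leI)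
  next
    case True
    with r assms show ?thesis by (simp add: ennreal_power top_unique)
  qed
qed simp

lemma (in prob_space) core:
  fixes f :: "'a \<Rightarrow> real \<Rightarrow> real" and g :: "real \<Rightarrow> real" and a b G :: real
  assumes meas[measurable]: "(\<lambda>x. f (fst x) (snd x)) \<in> borel_measurable (M \<Otimes>\<^sub>M lborel)"
    and gm[measurable]: "g \<in> borel_measurable borel"
    and ab: "a < b" and G0: "0 \<le> G"
    and gpos: "\<And>u. a < u \<Longrightarrow> u < b \<Longrightarrow> 0 < g u"
    and gint: "(\<integral>\<^sup>+u. ennreal (g u) * indicator {a<..<b} u \<partial>lborel) \<le> ennreal G"
    and mom: "\<And>u. a < u \<Longrightarrow> u < b \<Longrightarrow> (\<integral>\<^sup>+\<omega>. ennreal ((f \<omega> u)\<^sup>2) \<partial>M) \<le> ennreal ((g u)\<^sup>2)"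
  shows "AE \<omega> in M. set_integrable lborel {a<..<b} (f \<omega>)"
    and "(\<lambda>\<omega>. LBINT u=a..b. f \<omega> u) \<in> borel_measurable M"
    and "(\<integral>\<^sup>+\<omega>. ennreal ((LBINT u=a..b. f \<omega> u)\<^sup>2) \<partial>M) \<le> ennreal (G\<^sup>2)"
proof -
  interpret P: pair_sigma_finite M lborel
    by (intro pair_sigma_finite.intro sigma_finite_measure_axioms sigma_finite_lborel)
  define S where "S = {a<..<b}"
  have [measurable]: "S \<in> sets borel" by (simp add: S_def)
  have fm1[measurable]: "(\<lambda>\<omega>. f \<omega> u) \<in> borel_measurable M" for u
    using measurable_Pair1[OF meas, of u] by simp
  have fm2: "f \<omega> \<in> borel_measurable borel" if "\<omega> \<in> space M" for \<omega>
    using measurable_Pair2[OF meas that] by simp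
  have step1: "(\<integral>\<^sup>+\<omega>. ennreal \<bar>f \<omega> u\<bar> \<partial>M) \<le> ennreal (g u)" if u: "u \<in> S" for u
  proof (rule ennreal_sq_le_imp_le)
    have "(\<integral>\<^sup>+\<omega>. ennreal \<bar>f \<omega> u\<bar> * 1 \<partial>M)\<^sup>2 \<le> (\<integral>\<^sup>+\<omega>. (ennreal \<bar>f \<omega> u\<bar>)\<^sup>2 \<partial>M) * (\<integral>\<^sup>+\<omega>. 1 ^ 2 \<partial>M)"
      by (rule Cauchy_Schwarz_nn_integral) auto
    also have "\<dots> = (\<integral>\<^sup>+\<omega>. ennreal ((f \<omega> u)\<^sup>2) \<partial>M)"
      by (simp add: ennreal_power emeasure_space_1)
    also have "\<dots> \<le> ennreal ((g u)\<^sup>2)" using u mom by (auto simp: S_def)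
    also have "\<dots> = (ennreal (g u))\<^sup>2"
    proof -
      have "0 \<le> g u" using gpos[of u] u by (simp add: S_def)
      then show ?thesis by (simp add: ennreal_power)
    qed
    finally show "(\<integral>\<^sup>+\<omega>. ennreal \<bar>f \<omega> u\<bar> \<partial>M)\<^sup>2 \<le> (ennreal (g u))\<^sup>2" by simp
  qed
  have step2: "(\<integral>\<^sup>+\<omega>. (\<integral>\<^sup>+u. ennreal \<bar>f \<omega> u\<bar> * indicator S u \<partial>lborel) \<partial>M) \<le> ennreal G"
  proof -
    have "(\<integral>\<^sup>+\<omega>. (\<integral>\<^sup>+u. ennreal \<bar>f \<omega> u\<bar> * indicator S u \<partial>lborel) \<partial>M)
       = (\<integral>\<^sup>+u. (\<integral>\<^sup>+\<omega>. ennreal \<bar>f \<omega> u\<bar> * indicator S u \<partial>M) \<partial>lborel)"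
      by (rule P.Fubini'[symmetric]) measurable
    also have "\<dots> = (\<integral>\<^sup>+u. (\<integral>\<^sup>+\<omega>. ennreal \<bar>f \<omega> u\<bar> \<partial>M) * indicator S u \<partial>lborel)"
      by (intro nn_integral_cong nn_integral_multc) measurable
    also have "\<dots> \<le> (\<integral>\<^sup>+u. ennreal (g u) * indicator S u \<partial>lborel)"
      using step1 by (intro nn_integral_mono) (auto split: split_indicator)
    also have "\<dots> \<le> ennreal G" using gint by (simp add: S_def)
    finally show ?thesis .
  qed
  have AEfin: "AE \<omega> in M. (\<integral>\<^sup>+u. ennreal \<bar>f \<omega> u\<bar> * indicator S u \<partial>lborel) \<noteq> \<infinity>"
    by (rule nn_integral_PInf_AE) (use step2 in \<open>auto simp: top_unique\<close>)
  have integ: "set_integrable lborel S (f \<omega>)"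
    if "(\<integral>\<^sup>+u. ennreal \<bar>f \<omega> u\<bar> * indicator S u \<partial>lborel) \<noteq> \<infinity>" "\<omega> \<in> space M" for \<omega>
    unfolding set_integrable_def
  proof (rule integrableI_bounded)
    show "(\<lambda>u. indicator S u *\<^sub>R f \<omega> u) \<in> borel_measurable lborel" using fm2[OF that(2)] by measurable
    have "(\<integral>\<^sup>+u. ennreal (norm (indicator S u *\<^sub>R f \<omega> u)) \<partial>lborel) = (\<integral>\<^sup>+u. ennreal \<bar>f \<omega> u\<bar> * indicator S u \<partial>lborel)"
      by (intro nn_integral_cong) (auto split: split_indicator)
    then show "(\<integral>\<^sup>+u. ennreal (norm (indicator S u *\<^sub>R f \<omega> u)) \<partial>lborel) < \<infinity>"
      using that(1) by (simp add: top.not_eq_extremum)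
  qed
  show "AE \<omega> in M. set_integrable lborel {a<..<b} (f \<omega>)"
    using AEfin AE_space by eventually_elim (use integ in \<open>auto simp: S_def\<close>)
  have LB: "(LBINT u=a..b. f \<omega> u) = (\<integral>u. indicator S u *\<^sub>R f \<omega> u \<partial>lborel)" for \<omega>
    using ab by (simp add: interval_lebesgue_integral_def set_lebesgue_integral_def S_def)
  show "(\<lambda>\<omega>. LBINT u=a..b. f \<omega> u) \<in> borel_measurable M"
    unfolding LB by measurable
  define Gi where "Gi = (\<integral>\<^sup>+u. ennreal (g u) * indicator S u \<partial>lborel)"
  define J where "J = (\<lambda>\<omega>. \<integral>\<^sup>+u. ennreal ((f \<omega> u)\<^sup>2 / g u) * indicator S u \<partial>lborel)"
  have pw: "ennreal ((LBINT u=a..b. f \<omega> u)\<^sup>2) \<le> Gi * J \<omega>"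
    if int: "set_integrable lborel S (f \<omega>)" and om: "\<omega> \<in> space M" for \<omega>
  proof -
    have [measurable]: "f \<omega> \<in> borel_measurable borel" using fm2[OF om] .
    have "ennreal \<bar>LBINT u=a..b. f \<omega> u\<bar> = ennreal (norm (\<integral>u. indicator S u *\<^sub>R f \<omega> u \<partial>lborel))"
      by (simp add: LB)
    also have "\<dots> \<le> (\<integral>\<^sup>+u. ennreal (norm (indicator S u *\<^sub>R f \<omega> u)) \<partial>lborel)"
      by (rule integral_norm_bound_ennreal) (use int in \<open>simp add: set_integrable_def\<close>)
    also have "\<dots> = (\<integral>\<^sup>+u. (ennreal (sqrt (g u)) * indicator S u) * (ennreal (\<bar>f \<omega> u\<bar> / sqrt (g u)) * indicator S u) \<partial>lborel)"
    proof (intro nn_integral_cong)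
      fix u show "ennreal (norm (indicator S u *\<^sub>R f \<omega> u)) = (ennreal (sqrt (g u)) * indicator S u) * (ennreal (\<bar>f \<omega> u\<bar> / sqrt (g u)) * indicator S u)"
      proof (cases "u \<in> S")
        case True
        then have "0 < g u" using gpos by (auto simp: S_def)
        then show ?thesis using True by (simp add: ennreal_mult[symmetric])
      qed simp
    qed
    finally have A: "ennreal \<bar>LBINT u=a..b. f \<omega> u\<bar> \<le> (\<integral>\<^sup>+u. (ennreal (sqrt (g u)) * indicator S u) * (ennreal (\<bar>f \<omega> u\<bar> / sqrt (g u)) * indicator S u) \<partial>lborel)" .
    have "ennreal ((LBINT u=a..b. f \<omega> u)\<^sup>2) = (ennreal \<bar>LBINT u=a..b. f \<omega> u\<bar>)\<^sup>2"
      by (simp add: ennreal_power)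
    also have "\<dots> \<le> (\<integral>\<^sup>+u. (ennreal (sqrt (g u)) * indicator S u) * (ennreal (\<bar>f \<omega> u\<bar> / sqrt (g u)) * indicator S u) \<partial>lborel)\<^sup>2"
      using A by (intro power_mono) auto
    also have "\<dots> \<le> (\<integral>\<^sup>+u. (ennreal (sqrt (g u)) * indicator S u)\<^sup>2 \<partial>lborel) * (\<integral>\<^sup>+u. (ennreal (\<bar>f \<omega> u\<bar> / sqrt (g u)) * indicator S u)\<^sup>2 \<partial>lborel)"
      by (rule Cauchy_Schwarz_nn_integral) measurable
    also have "\<dots> = Gi * J \<omega>"
    proof -
      have "(\<integral>\<^sup>+u. (ennreal (sqrt (g u)) * indicator S u)\<^sup>2 \<partial>lborel) = Gi"
        unfolding Gi_def
      proof (intro nn_integral_cong)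
        fix u show "(ennreal (sqrt (g u)) * indicator S u)\<^sup>2 = ennreal (g u) * indicator S u"
        proof (cases "u \<in> S")
          case True
          then have "0 < g u" using gpos by (auto simp: S_def)
          then show ?thesis using True by (simp add: ennreal_power)
        qed simp
      qed
      moreover have "(\<integral>\<^sup>+u. (ennreal (\<bar>f \<omega> u\<bar> / sqrt (g u)) * indicator S u)\<^sup>2 \<partial>lborel) = J \<omega>"
        unfolding J_def
      proof (intro nn_integral_cong)
        fix u show "(ennreal (\<bar>f \<omega> u\<bar> / sqrt (g u)) * indicator S u)\<^sup>2 = ennreal ((f \<omega> u)\<^sup>2 / g u) * indicator S u"
        proof (cases "u \<in> S")
          case True
          then have "0 < g u" using gpos by (auto simp: S_def)
          then show ?thesis using True by (simp add: ennreal_power power_divide)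
        qed simp
      qed
      ultimately show ?thesis by simp
    qed
    finally show ?thesis .
  qed
  have Jm: "J \<in> borel_measurable M"
    unfolding J_def by measurable
  have "(\<integral>\<^sup>+\<omega>. ennreal ((LBINT u=a..b. f \<omega> u)\<^sup>2) \<partial>M) \<le> (\<integral>\<^sup>+\<omega>. Gi * J \<omega> \<partial>M)"
  proof (rule nn_integral_mono_AE)
    show "AE \<omega> in M. ennreal ((LBINT u=a..b. f \<omega> u)\<^sup>2) \<le> Gi * J \<omega>"
      using AEfin AE_space by eventually_elim (use pw integ in auto)
  qed
  also have "\<dots> = Gi * (\<integral>\<^sup>+\<omega>. J \<omega> \<partial>M)"
    by (rule nn_integral_cmult[OF Jm])
  also have "(\<integral>\<^sup>+\<omega>. J \<omega> \<partial>M) \<le> Gi"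
  proof -
    have "(\<integral>\<^sup>+\<omega>. J \<omega> \<partial>M) = (\<integral>\<^sup>+u. (\<integral>\<^sup>+\<omega>. ennreal ((f \<omega> u)\<^sup>2 / g u) * indicator S u \<partial>M) \<partial>lborel)"
      unfolding J_def by (rule P.Fubini'[symmetric]) measurable
    also have "\<dots> \<le> (\<integral>\<^sup>+u. ennreal (g u) * indicator S u \<partial>lborel)"
    proof (intro nn_integral_mono)
      fix u show "(\<integral>\<^sup>+\<omega>. ennreal ((f \<omega> u)\<^sup>2 / g u) * indicator S u \<partial>M) \<le> ennreal (g u) * indicator S u"
      proof (cases "u \<in> S")
        case True
        then have g0: "0 < g u" using gpos by (auto simp: S_def)
        have "(\<integral>\<^sup>+\<omega>. ennreal ((f \<omega> u)\<^sup>2 / g u) * indicator S u \<partial>M) = (\<integral>\<^sup>+\<omega>. ennreal ((f \<omega> u)\<^sup>2) * ennreal (1 / g u) \<partial>M)"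
          using True g0 by (intro nn_integral_cong) (simp add: ennreal_mult[symmetric])
        also have "\<dots> = (\<integral>\<^sup>+\<omega>. ennreal ((f \<omega> u)\<^sup>2) \<partial>M) * ennreal (1 / g u)"
          by (rule nn_integral_multc) measurable
        also have "\<dots> \<le> ennreal ((g u)\<^sup>2) * ennreal (1 / g u)"
          using mom[of u] True by (intro mult_right_mono) (auto simp: S_def)
        also have "\<dots> = ennreal (g u) * indicator S u"
          using g0 True by (simp add: ennreal_mult[symmetric] power2_eq_square)
        finally show ?thesis .
      qed simp
    qed
    finally show ?thesis unfolding Gi_def .
  qed
  then have "Gi * (\<integral>\<^sup>+\<omega>. J \<omega> \<partial>M) \<le> Gi * Gi" by (rule mult_left_mono) simp
  also have "Gi * Gi \<le> ennreal G * ennreal G"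
    using gint unfolding Gi_def S_def by (intro mult_mono) auto
  also have "\<dots> = ennreal (G\<^sup>2)" using G0 by (simp add: ennreal_mult[symmetric] power2_eq_square)
  finally show "(\<integral>\<^sup>+\<omega>. ennreal ((LBINT u=a..b. f \<omega> u)\<^sup>2) \<partial>M) \<le> ennreal (G\<^sup>2)" .
qed

lemma ennreal_2sum:
  fixes P Q :: real
  assumes "0 \<le> P" "0 \<le> Q"
  shows "2 * ennreal P + 2 * ennreal Q = ennreal (2 * P + 2 * Q)"
proof -
  have "ennreal (2 * P + 2 * Q) = ennreal (2 * P) + ennreal (2 * Q)"
    by (rule ennreal_plus) (use assms in auto)
  moreover have "ennreal (2 * P) = 2 * ennreal P" "ennreal (2 * Q) = 2 * ennreal Q"
    using assms by (simp_all add: ennreal_mult)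
  ultimately show ?thesis by simp
qed

lemma powr_m1_mult: fixes D e :: real shows "0 < D \<Longrightarrow> D powr (e - 1) * D = D powr e"
  using powr_add[of D "e - 1" 1] by simp

lemma sq_powr: fixes x a :: real shows "0 \<le> x \<Longrightarrow> (x powr a)\<^sup>2 = x powr (2 * a)"
  by (cases "x = 0") (simp_all add: powr_realpow[symmetric] powr_powr mult.commute)



locale fbm_ctx =
  fixes M :: "'a measure" and H \<alpha> :: real and B :: "real \<Rightarrow> 'a \<Rightarrow> real"
  assumes fbm: "fbm M H B" and H0: "0 < H" and H1: "H < 1" and \<alpha>0: "1 - H < \<alpha>" and \<alpha>1: "\<alpha> < 1"
begin

sublocale prob_space M using fbm by (simp add: fbm_def)

lemma Bm[measurable]: "B t \<in> borel_measurable M"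
  using fbm by (simp add: fbm_def)

lemma Bcont: "\<omega> \<in> space M \<Longrightarrow> continuous_on {0..} (\<lambda>t. B t \<omega>)"
  using fbm by (simp add: fbm_def)

lemma cov: "0 \<le> s \<Longrightarrow> 0 \<le> t \<Longrightarrow> expectation (\<lambda>\<omega>. B t \<omega> * B s \<omega>) = (t powr (2*H) + s powr (2*H) - \<bar>t - s\<bar> powr (2*H)) / 2"
  using fbm by (simp add: fbm_def)


lemma sq_int: assumes "0 \<le> t" shows "integrable M (\<lambda>\<omega>. (B t \<omega>)\<^sup>2)"
proof -
  have "centered_gaussian_rv M (\<lambda>\<omega>. \<Sum>s\<in>{t}. (\<lambda>_. 1) s * B s \<omega>)"
  proof -
    have "\<forall>I c. finite I \<and> I \<subseteq> {0..} \<longrightarrow> centered_gaussian_rv M (\<lambda>\<omega>. \<Sum>t\<in>I. c t * B t \<omega>)"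
      using fbm unfolding fbm_def by (elim conjE) assumption
    note A = spec[OF spec[OF this, of "{t}"], of "\<lambda>_. 1"]
    have h: "finite {t} \<and> {t} \<subseteq> {0..}" using assms by auto
    show ?thesis using mp[OF A h] by simp
  qed
  then have g: "centered_gaussian_rv M (B t)" by simp
  show ?thesis
  proof (cases "AE \<omega> in M. B t \<omega> = 0")
    case True
    then have "AE \<omega> in M. (\<lambda>\<omega>. 0) \<omega> = (B t \<omega>)\<^sup>2" by eventually_elim simp
    moreover have m: "(\<lambda>\<omega>. (B t \<omega>)\<^sup>2) \<in> borel_measurable M" by measurable
    ultimately show ?thesis using integrable_cong_AE_imp[OF integrable_zero m] by blast
  next
    case False
    from g False have "\<exists>\<sigma>>0. distributed M lborel (B t) (normal_density 0 \<sigma>)"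
      unfolding centered_gaussian_rv_def by blast
    then obtain \<sigma> where \<sigma>: "0 < \<sigma>" "distributed M lborel (B t) (normal_density 0 \<sigma>)"
      by blast
    have I: "integrable lborel (\<lambda>x. normal_density 0 \<sigma> x * x\<^sup>2)"
      using integrable_normal_moment[where \<mu>=0 and \<sigma>=\<sigma> and k=2] \<sigma>(1) by simp
    have "integrable lborel (\<lambda>x. normal_density 0 \<sigma> x * x\<^sup>2) = integrable M (\<lambda>\<omega>. (B t \<omega>)\<^sup>2)"
      by (rule distributed_integrable[OF \<sigma>(2)]) auto
    with I show ?thesis by simp
  qed
qed


lemma prod_int: assumes "0 \<le> s" "0 \<le> t" shows "integrable M (\<lambda>\<omega>. B t \<omega> * B s \<omega>)"
proof (rule Bochner_Integration.integrable_bound)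
  show "integrable M (\<lambda>\<omega>. (B t \<omega>)\<^sup>2 + (B s \<omega>)\<^sup>2)"
    using sq_int assms by auto
  show "(\<lambda>\<omega>. B t \<omega> * B s \<omega>) \<in> borel_measurable M" by measurable
  show "AE \<omega> in M. norm (B t \<omega> * B s \<omega>) \<le> norm ((B t \<omega>)\<^sup>2 + (B s \<omega>)\<^sup>2)"
  proof (rule AE_I2)
    fix \<omega>
    have "\<bar>B t \<omega> * B s \<omega>\<bar> \<le> (B t \<omega>)\<^sup>2 + (B s \<omega>)\<^sup>2"
    proof -
      have "0 \<le> (\<bar>B t \<omega>\<bar> - \<bar>B s \<omega>\<bar>)\<^sup>2" by simp
      then have "2 * (\<bar>B t \<omega>\<bar> * \<bar>B s \<omega>\<bar>) \<le> (B t \<omega>)\<^sup>2 + (B s \<omega>)\<^sup>2"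
        by (simp add: power2_eq_square algebra_simps abs_mult_self_eq)
      moreover have "0 \<le> \<bar>B t \<omega>\<bar> * \<bar>B s \<omega>\<bar>" by simp
      ultimately have "\<bar>B t \<omega>\<bar> * \<bar>B s \<omega>\<bar> \<le> (B t \<omega>)\<^sup>2 + (B s \<omega>)\<^sup>2" by linarith
      then show ?thesis by (simp add: abs_mult)
    qed
    then show "norm (B t \<omega> * B s \<omega>) \<le> norm ((B t \<omega>)\<^sup>2 + (B s \<omega>)\<^sup>2)" by simp
  qed
qed


lemma inc_sq:
  assumes "0 \<le> a" "0 \<le> b"
  shows "(\<integral>\<^sup>+\<omega>. ennreal ((c * (B a \<omega> - B b \<omega>))\<^sup>2) \<partial>M) = ennreal (c\<^sup>2 * \<bar>a - b\<bar> powr (2*H))"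
proof -
  have e: "(c * (B a \<omega> - B b \<omega>))\<^sup>2 = c\<^sup>2 * (B a \<omega> * B a \<omega>) - 2 * c\<^sup>2 * (B a \<omega> * B b \<omega>) + c\<^sup>2 * (B b \<omega> * B b \<omega>)" for \<omega>
    by (simp add: algebra_simps power2_eq_square)
  have i1: "integrable M (\<lambda>\<omega>. B a \<omega> * B a \<omega>)" "integrable M (\<lambda>\<omega>. B a \<omega> * B b \<omega>)" "integrable M (\<lambda>\<omega>. B b \<omega> * B b \<omega>)"
    using prod_int assms by auto
  have int: "integrable M (\<lambda>\<omega>. (c * (B a \<omega> - B b \<omega>))\<^sup>2)"
    unfolding e using i1 by auto
  have "(\<integral>\<omega>. (c * (B a \<omega> - B b \<omega>))\<^sup>2 \<partial>M) = c\<^sup>2 * expectation (\<lambda>\<omega>. B a \<omega> * B a \<omega>) - 2 * c\<^sup>2 * expectation (\<lambda>\<omega>. B a \<omega> * B b \<omega>) + c\<^sup>2 * expectation (\<lambda>\<omega>. B b \<omega> * B b \<omega>)"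
    unfolding e using i1 by simp
  also have "\<dots> = c\<^sup>2 * \<bar>a - b\<bar> powr (2*H)"
    using assms by (simp add: cov field_simps)
  finally have E: "(\<integral>\<omega>. (c * (B a \<omega> - B b \<omega>))\<^sup>2 \<partial>M) = c\<^sup>2 * \<bar>a - b\<bar> powr (2*H)" .
  show ?thesis
    using nn_integral_eq_integral[OF int] E by simp
qed


lemma joint[measurable]: "(\<lambda>x. B (max 0 (snd x)) (fst x)) \<in> borel_measurable (M \<Otimes>\<^sub>M lborel)"
proof -
  define q where "q n u = max 0 (real_of_int \<lceil>real (Suc n) * u\<rceil> / real (Suc n))" for n u
  have qlim: "(\<lambda>n. q n u) \<longlonglongrightarrow> max 0 u" for u
  proof -
    have lo: "u \<le> real_of_int \<lceil>real (Suc n) * u\<rceil> / real (Suc n)" for n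
    proof -
      have "real (Suc n) * u \<le> real_of_int \<lceil>real (Suc n) * u\<rceil>" by (rule le_of_int_ceiling)
      then have "real (Suc n) * u / real (Suc n) \<le> real_of_int \<lceil>real (Suc n) * u\<rceil> / real (Suc n)"
        by (rule divide_right_mono) simp
      then show ?thesis by (simp del: of_nat_Suc)
    qed
    have hi: "real_of_int \<lceil>real (Suc n) * u\<rceil> / real (Suc n) \<le> u + 1 / real (Suc n)" for n
    proof -
      have "real_of_int \<lceil>real (Suc n) * u\<rceil> \<le> real (Suc n) * u + 1" by linarith
      then have "real_of_int \<lceil>real (Suc n) * u\<rceil> / real (Suc n) \<le> (real (Suc n) * u + 1) / real (Suc n)"
        by (rule divide_right_mono) simp
      also have "\<dots> = u + 1 / real (Suc n)" by (simp add: add_divide_distrib del: of_nat_Suc)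
      finally show ?thesis .
    qed
    have "(\<lambda>n. u + 1 / real (Suc n)) \<longlonglongrightarrow> u + 0"
      by (intro tendsto_add tendsto_const) (rule LIMSEQ_Suc[OF lim_inverse_n'])
    then have h: "(\<lambda>n. u + 1 / real (Suc n)) \<longlonglongrightarrow> u" by simp
    have "(\<lambda>n. real_of_int \<lceil>real (Suc n) * u\<rceil> / real (Suc n)) \<longlonglongrightarrow> u"
      by (rule tendsto_sandwich[OF _ _ tendsto_const h]) (use lo hi in auto)
    then show ?thesis unfolding q_def by (intro tendsto_max tendsto_const)
  qed
  show ?thesis
  proof (rule borel_measurable_LIMSEQ_real)
    fix x :: "'a \<times> real" assume x: "x \<in> space (M \<Otimes>\<^sub>M lborel)"
    then have "fst x \<in> space M" by (auto simp: space_pair_measure)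
    from Bcont[OF this] show "(\<lambda>n. B (q n (snd x)) (fst x)) \<longlonglongrightarrow> B (max 0 (snd x)) (fst x)"
      by (rule continuous_on_tendsto_compose[OF _ qlim]) (auto simp: q_def)
  next
    fix n
    have "(\<lambda>x. (\<lambda>k::int. \<lambda>x. B (max 0 (real_of_int k / real (Suc n))) (fst x)) (\<lceil>real (Suc n) * snd x\<rceil>) x) \<in> borel_measurable (M \<Otimes>\<^sub>M lborel)"
      by (rule measurable_compose_countable) measurable
    then show "(\<lambda>x. B (q n (snd x)) (fst x)) \<in> borel_measurable (M \<Otimes>\<^sub>M lborel)"
      by (simp add: q_def)
  qed
qed


lemma coreB:
  fixes \<phi> w g :: "real \<Rightarrow> real" and r a b G :: real
  assumes r: "0 \<le> r" and ab: "a < b" and G0: "0 \<le> G"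
    and \<phi>m[measurable]: "\<phi> \<in> borel_measurable borel"
    and wm[measurable]: "w \<in> borel_measurable borel" and gm[measurable]: "g \<in> borel_measurable borel"
    and \<phi>0: "\<And>u. a < u \<Longrightarrow> u < b \<Longrightarrow> 0 \<le> \<phi> u"
    and gpos: "\<And>u. a < u \<Longrightarrow> u < b \<Longrightarrow> 0 < g u"
    and gbd: "\<And>u. a < u \<Longrightarrow> u < b \<Longrightarrow> \<bar>w u\<bar> * \<bar>\<phi> u - r\<bar> powr H \<le> g u"
    and gint: "(\<integral>\<^sup>+u. ennreal (g u) * indicator {a<..<b} u \<partial>lborel) \<le> ennreal G"
  shows "AE \<omega> in M. set_integrable lborel {a<..<b} (\<lambda>u. (B (max 0 (\<phi> u)) \<omega> - B r \<omega>) * w u)"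
    and "(\<lambda>\<omega>. LBINT u=a..b. (B (max 0 (\<phi> u)) \<omega> - B r \<omega>) * w u) \<in> borel_measurable M"
    and "(\<integral>\<^sup>+\<omega>. ennreal ((LBINT u=a..b. (B (max 0 (\<phi> u)) \<omega> - B r \<omega>) * w u)\<^sup>2) \<partial>M) \<le> ennreal (G\<^sup>2)"
proof -
  have j2: "(\<lambda>x. B (max 0 (\<phi> (snd x))) (fst x)) \<in> borel_measurable (M \<Otimes>\<^sub>M lborel)"
  proof -
    have "(\<lambda>x. (fst x, \<phi> (snd x))) \<in> measurable (M \<Otimes>\<^sub>M lborel) (M \<Otimes>\<^sub>M lborel)"
      by measurable
    from measurable_compose[OF this joint] show ?thesis by simp
  qed
  have meas: "(\<lambda>x. (\<lambda>\<omega> u. (B (max 0 (\<phi> u)) \<omega> - B r \<omega>) * w u) (fst x) (snd x)) \<in> borel_measurable (M \<Otimes>\<^sub>M lborel)"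
    using j2 by measurable
  have mom: "(\<integral>\<^sup>+\<omega>. ennreal (((B (max 0 (\<phi> u)) \<omega> - B r \<omega>) * w u)\<^sup>2) \<partial>M) \<le> ennreal ((g u)\<^sup>2)"
    if u: "a < u" "u < b" for u
  proof -
    have "(\<integral>\<^sup>+\<omega>. ennreal (((B (max 0 (\<phi> u)) \<omega> - B r \<omega>) * w u)\<^sup>2) \<partial>M)
        = (\<integral>\<^sup>+\<omega>. ennreal ((w u * (B (\<phi> u) \<omega> - B r \<omega>))\<^sup>2) \<partial>M)"
      using \<phi>0[OF u] by (simp add: max_def mult.commute)
    also have "\<dots> = ennreal ((w u)\<^sup>2 * \<bar>\<phi> u - r\<bar> powr (2*H))"
      using \<phi>0[OF u] r by (rule inc_sq)
    also have "\<dots> \<le> ennreal ((g u)\<^sup>2)"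
    proof (rule ennreal_leI)
      have "(w u)\<^sup>2 * \<bar>\<phi> u - r\<bar> powr (2*H) = (\<bar>w u\<bar> * \<bar>\<phi> u - r\<bar> powr H)\<^sup>2"
        by (simp add: power_mult_distrib powr_powr[symmetric] powr_realpow[symmetric] mult.commute)
      also have "\<dots> \<le> (g u)\<^sup>2"
        using gbd[OF u] by (intro power_mono) auto
      finally show "(w u)\<^sup>2 * \<bar>\<phi> u - r\<bar> powr (2*H) \<le> (g u)\<^sup>2" .
    qed
    finally show ?thesis .
  qed
  note C = core[OF meas gm ab G0 gpos gint mom]
  show "AE \<omega> in M. set_integrable lborel {a<..<b} (\<lambda>u. (B (max 0 (\<phi> u)) \<omega> - B r \<omega>) * w u)"
    using C(1) by simp
  show "(\<lambda>\<omega>. LBINT u=a..b. (B (max 0 (\<phi> u)) \<omega> - B r \<omega>) * w u) \<in> borel_measurable M"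
    using C(2) by simp
  show "(\<integral>\<^sup>+\<omega>. ennreal ((LBINT u=a..b. (B (max 0 (\<phi> u)) \<omega> - B r \<omega>) * w u)\<^sup>2) \<partial>M) \<le> ennreal (G\<^sup>2)"
    using C(3) by simp
qed


definition N :: "('a \<Rightarrow> real) \<Rightarrow> ennreal" where
  "N Y = (\<integral>\<^sup>+\<omega>. ennreal ((Y \<omega>)\<^sup>2) \<partial>M)"

lemma N_add:
  assumes [measurable]: "Y \<in> borel_measurable M" "Z \<in> borel_measurable M"
  shows "N (\<lambda>\<omega>. Y \<omega> + Z \<omega>) \<le> 2 * N Y + 2 * N Z"
proof -
  have "N (\<lambda>\<omega>. Y \<omega> + Z \<omega>) \<le> (\<integral>\<^sup>+\<omega>. 2 * ennreal ((Y \<omega>)\<^sup>2) + 2 * ennreal ((Z \<omega>)\<^sup>2) \<partial>M)"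
    unfolding N_def
  proof (intro nn_integral_mono)
    fix \<omega>
    have "(Y \<omega> + Z \<omega>)\<^sup>2 \<le> 2 * (Y \<omega>)\<^sup>2 + 2 * (Z \<omega>)\<^sup>2"
      using sum_squares_bound[of "Y \<omega> - Z \<omega>" 0] by (simp add: power2_eq_square algebra_simps)
    then have "ennreal ((Y \<omega> + Z \<omega>)\<^sup>2) \<le> ennreal (2 * (Y \<omega>)\<^sup>2 + 2 * (Z \<omega>)\<^sup>2)"
      by (rule ennreal_leI)
    also have "\<dots> = 2 * ennreal ((Y \<omega>)\<^sup>2) + 2 * ennreal ((Z \<omega>)\<^sup>2)"
      by (subst ennreal_plus) (auto simp: ennreal_mult)
    finally show "ennreal ((Y \<omega> + Z \<omega>)\<^sup>2) \<le> 2 * ennreal ((Y \<omega>)\<^sup>2) + 2 * ennreal ((Z \<omega>)\<^sup>2)" .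
  qed
  also have "\<dots> = 2 * N Y + 2 * N Z"
    unfolding N_def by (simp add: nn_integral_add nn_integral_cmult)
  finally show ?thesis .
qed

lemma N_cong_AE: "AE \<omega> in M. Y \<omega> = Z \<omega> \<Longrightarrow> N Y = N Z"
  unfolding N_def by (intro nn_integral_cong_AE) auto

lemma N_minus_commute: "N (\<lambda>\<omega>. Y \<omega> - Z \<omega>) = N (\<lambda>\<omega>. Z \<omega> - Y \<omega>)"
  unfolding N_def by (simp add: power2_commute)

lemma N_inc: "0 \<le> a \<Longrightarrow> 0 \<le> b \<Longrightarrow> N (\<lambda>\<omega>. c * (B a \<omega> - B b \<omega>)) = ennreal (c\<^sup>2 * \<bar>a - b\<bar> powr (2*H))"
  unfolding N_def by (rule inc_sq)

lemma Xalt: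
  assumes "0 \<le> c" "c < b"
  shows "fbm_X \<alpha> B b c \<omega> = (b - c) powr (\<alpha> - 1) * (B b \<omega> - B c \<omega>)
           + (LBINT u=c..b. (B (max 0 u) \<omega> - B c \<omega>) * (u - c) powr (\<alpha> - 2))"
proof -
  have 1: "(B b \<omega> - B c \<omega>) / (b - c) powr (1 - \<alpha>) = (b - c) powr (\<alpha> - 1) * (B b \<omega> - B c \<omega>)"
    using assms by (simp add: powr_diff powr_minus_divide divide_simps)
  have 2: "(LBINT u=c..b. (B u \<omega> - B c \<omega>) / (u - c) powr (2 - \<alpha>)) = (LBINT u=c..b. (B (max 0 u) \<omega> - B c \<omega>) * (u - c) powr (\<alpha> - 2))"
  proof (rule interval_integral_cong)
    fix u assume "u \<in> einterval (min (ereal c) (ereal b)) (max (ereal c) (ereal b))"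
    then have u: "c < u" "u < b" using assms by (auto simp: einterval_def min_def max_def split: if_splits)
    then have "max 0 u = u" using assms by simp
    moreover have "(u - c) powr (\<alpha> - 2) = 1 / (u - c) powr (2 - \<alpha>)"
      using u by (simp add: powr_minus_divide[symmetric])
    ultimately show "(B u \<omega> - B c \<omega>) / (u - c) powr (2 - \<alpha>) = (B (max 0 u) \<omega> - B c \<omega>) * (u - c) powr (\<alpha> - 2)"
      by simp
  qed
  show ?thesis unfolding fbm_X_def 1 2 ..
qed

lemma Xint:
  assumes c: "0 \<le> c" "c < b"
  shows "AE \<omega> in M. set_integrable lborel {c<..<b} (\<lambda>u. (B (max 0 u) \<omega> - B c \<omega>) * (u - c) powr (\<alpha> - 2))"
    and "(\<lambda>\<omega>. LBINT u=c..b. (B (max 0 u) \<omega> - B c \<omega>) * (u - c) powr (\<alpha> - 2)) \<in> borel_measurable M"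
    and "N (\<lambda>\<omega>. LBINT u=c..b. (B (max 0 u) \<omega> - B c \<omega>) * (u - c) powr (\<alpha> - 2)) \<le> ennreal (((b - c) powr (H + \<alpha> - 1) / (H + \<alpha> - 1))\<^sup>2)"
proof -
  have g0: "0 < H + \<alpha> - 1" using \<alpha>0 by simp
  note C = coreB[where \<phi>="\<lambda>u. u" and r=c and a=c and b=b and w="\<lambda>u. (u - c) powr (\<alpha> - 2)"
      and g="\<lambda>u. (u - c) powr (H + \<alpha> - 1 - 1)" and G="(b - c) powr (H + \<alpha> - 1) / (H + \<alpha> - 1)"]
  have h: "\<bar>(u - c) powr (\<alpha> - 2)\<bar> * \<bar>u - c\<bar> powr H \<le> (u - c) powr (H + \<alpha> - 1 - 1)" if "c < u" for u
  proof -
    have "\<bar>(u - c) powr (\<alpha> - 2)\<bar> * \<bar>u - c\<bar> powr H = (u - c) powr (\<alpha> - 2 + H)"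
      using that by (simp add: powr_add)
    also have "\<alpha> - 2 + H = H + \<alpha> - 1 - 1" by simp
    finally show ?thesis by simp
  qed
  have gi: "(\<integral>\<^sup>+u. ennreal ((u - c) powr (H + \<alpha> - 1 - 1)) * indicator {c<..<b} u \<partial>lborel) \<le> ennreal ((b - c) powr (H + \<alpha> - 1) / (H + \<alpha> - 1))"
    using powr_int_0[OF g0 c(2)] by simp
  have C': "AE \<omega> in M. set_integrable lborel {c<..<b} (\<lambda>u. (B (max 0 u) \<omega> - B c \<omega>) * (u - c) powr (\<alpha> - 2))"
    "(\<lambda>\<omega>. LBINT u=c..b. (B (max 0 u) \<omega> - B c \<omega>) * (u - c) powr (\<alpha> - 2)) \<in> borel_measurable M"
    "(\<integral>\<^sup>+\<omega>. ennreal ((LBINT u=c..b. (B (max 0 u) \<omega> - B c \<omega>) * (u - c) powr (\<alpha> - 2))\<^sup>2) \<partial>M) \<le> ennreal (((b - c) powr (H + \<alpha> - 1) / (H + \<alpha> - 1))\<^sup>2)"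
    by (rule C; use c g0 h gi in \<open>auto\<close>)+
  show "AE \<omega> in M. set_integrable lborel {c<..<b} (\<lambda>u. (B (max 0 u) \<omega> - B c \<omega>) * (u - c) powr (\<alpha> - 2))"
    "(\<lambda>\<omega>. LBINT u=c..b. (B (max 0 u) \<omega> - B c \<omega>) * (u - c) powr (\<alpha> - 2)) \<in> borel_measurable M"
    using C' by auto
  show "N (\<lambda>\<omega>. LBINT u=c..b. (B (max 0 u) \<omega> - B c \<omega>) * (u - c) powr (\<alpha> - 2)) \<le> ennreal (((b - c) powr (H + \<alpha> - 1) / (H + \<alpha> - 1))\<^sup>2)"
    using C'(3) by (simp add: N_def)
qed


lemma Xm: assumes "0 \<le> c" "c < b" shows "fbm_X \<alpha> B b c \<in> borel_measurable M"
proof -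
  have "fbm_X \<alpha> B b c = (\<lambda>\<omega>. (b - c) powr (\<alpha> - 1) * (B b \<omega> - B c \<omega>)
           + (LBINT u=c..b. (B (max 0 u) \<omega> - B c \<omega>) * (u - c) powr (\<alpha> - 2)))"
    using Xalt[OF assms] by auto
  also have "\<dots> \<in> borel_measurable M"
    using Xint(2)[OF assms] by measurable
  finally show ?thesis .
qed

lemma P1:
  assumes c: "0 \<le> c" "c < b"
  shows "N (fbm_X \<alpha> B b c) \<le> ennreal ((2 + 2 / (H + \<alpha> - 1)\<^sup>2) * (b - c) powr (2 * (H + \<alpha> - 1)))"
proof -
  define L where "L = b - c"
  have L: "0 < L" using c by (simp add: L_def)
  have g0: "0 < H + \<alpha> - 1" using \<alpha>0 by simp
  let ?A = "\<lambda>\<omega>. (b - c) powr (\<alpha> - 1) * (B b \<omega> - B c \<omega>)"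
  let ?I = "\<lambda>\<omega>. LBINT u=c..b. (B (max 0 u) \<omega> - B c \<omega>) * (u - c) powr (\<alpha> - 2)"
  have "N (fbm_X \<alpha> B b c) = N (\<lambda>\<omega>. ?A \<omega> + ?I \<omega>)"
    using Xalt[OF c] by (simp add: N_def)
  also have "\<dots> \<le> 2 * N ?A + 2 * N ?I"
    by (rule N_add) (use Xint(2)[OF c] in measurable)
  also have "N ?A = ennreal (L powr (2 * (H + \<alpha> - 1)))"
  proof -
    have "N ?A = ennreal (((b - c) powr (\<alpha> - 1))\<^sup>2 * \<bar>b - c\<bar> powr (2 * H))"
      using c by (intro N_inc) auto
    also have "((b - c) powr (\<alpha> - 1))\<^sup>2 * \<bar>b - c\<bar> powr (2 * H) = L powr (2 * (H + \<alpha> - 1))"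
      using L by (simp add: L_def sq_powr powr_add[symmetric] algebra_simps)
    finally show ?thesis .
  qed
  also have "N ?I \<le> ennreal ((L powr (H + \<alpha> - 1) / (H + \<alpha> - 1))\<^sup>2)"
    using Xint(3)[OF c] by (simp add: L_def)
  also have "(L powr (H + \<alpha> - 1) / (H + \<alpha> - 1))\<^sup>2 = L powr (2 * (H + \<alpha> - 1)) / (H + \<alpha> - 1)\<^sup>2"
    using L by (simp add: power_divide sq_powr)
  finally have "N (fbm_X \<alpha> B b c) \<le> 2 * ennreal (L powr (2 * (H + \<alpha> - 1))) + 2 * ennreal (L powr (2 * (H + \<alpha> - 1)) / (H + \<alpha> - 1)\<^sup>2)"
    by (simp add: add_mono mult_left_mono)
  also have "\<dots> = ennreal ((2 + 2 / (H + \<alpha> - 1)\<^sup>2) * L powr (2 * (H + \<alpha> - 1)))"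
    by (subst ennreal_2sum) (auto simp: algebra_simps)
  finally show ?thesis by (simp add: L_def)
qed


lemma Nbound:
  assumes "0 \<le> p" "0 \<le> q" "\<bar>k\<bar> * \<bar>p - q\<bar> powr H \<le> R"
  shows "N (\<lambda>\<omega>. k * (B p \<omega> - B q \<omega>)) \<le> ennreal (R\<^sup>2)"
proof -
  have "N (\<lambda>\<omega>. k * (B p \<omega> - B q \<omega>)) = ennreal (k\<^sup>2 * \<bar>p - q\<bar> powr (2 * H))"
    using assms by (intro N_inc) auto
  also have "k\<^sup>2 * \<bar>p - q\<bar> powr (2 * H) = (\<bar>k\<bar> * \<bar>p - q\<bar> powr H)\<^sup>2"
    by (simp add: power_mult_distrib sq_powr)
  also have "ennreal \<dots> \<le> ennreal (R\<^sup>2)"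
    using assms by (intro ennreal_leI power_mono) auto
  finally show ?thesis .
qed

lemma Icoord:
  assumes c: "0 \<le> c" "c < a" "a \<le> b" and D: "b - a \<le> D" "D \<le> a - c" "0 < D"
  shows "N (\<lambda>\<omega>. fbm_X \<alpha> B b c \<omega> - fbm_X \<alpha> B a c \<omega>) \<le> ennreal (10 * D powr (2 * (H + \<alpha> - 1)))"
proof (cases "a = b")
  case True then show ?thesis by (simp add: N_def)
next
  case False
  with c have ab: "a < b" by simp
  have g0: "0 < H + \<alpha> - 1" using \<alpha>0 by simp
  define R where "R = D powr (H + \<alpha> - 1)"
  have R0: "0 \<le> R" by (simp add: R_def)
  define F where "F = (\<lambda>\<omega> u. (B (max 0 u) \<omega> - B c \<omega>) * (u - c) powr (\<alpha> - 2))"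
  let ?T1 = "\<lambda>\<omega>. (b - c) powr (\<alpha> - 1) * (B b \<omega> - B a \<omega>)"
  let ?T2 = "\<lambda>\<omega>. ((b - c) powr (\<alpha> - 1) - (a - c) powr (\<alpha> - 1)) * (B a \<omega> - B c \<omega>)"
  let ?T3 = "\<lambda>\<omega>. LBINT u=a..b. F \<omega> u"
  have cb: "c < b" using c ab by simp
  have eq: "AE \<omega> in M. fbm_X \<alpha> B b c \<omega> - fbm_X \<alpha> B a c \<omega> = (?T1 \<omega> + ?T2 \<omega>) + ?T3 \<omega>"
    using Xint(1)[OF c(1) cb]
  proof eventually_elim
    fix \<omega> assume int: "set_integrable lborel {c<..<b} (\<lambda>u. (B (max 0 u) \<omega> - B c \<omega>) * (u - c) powr (\<alpha> - 2))"
    have "(LBINT u=c..a. F \<omega> u) + (LBINT u=a..b. F \<omega> u) = (LBINT u=c..b. F \<omega> u)"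
      by (rule interval_integral_sum) (use int c ab in \<open>simp add: F_def interval_lebesgue_integrable_def min_def max_def\<close>)
    moreover have "fbm_X \<alpha> B b c \<omega> = (b - c) powr (\<alpha> - 1) * (B b \<omega> - B c \<omega>) + (LBINT u=c..b. F \<omega> u)"
      unfolding Xalt[OF c(1) cb] F_def ..
    moreover have "fbm_X \<alpha> B a c \<omega> = (a - c) powr (\<alpha> - 1) * (B a \<omega> - B c \<omega>) + (LBINT u=c..a. F \<omega> u)"
      unfolding Xalt[OF c(1) c(2)] F_def ..
    ultimately show "fbm_X \<alpha> B b c \<omega> - fbm_X \<alpha> B a c \<omega> = (?T1 \<omega> + ?T2 \<omega>) + ?T3 \<omega>"
      by (simp add: algebra_simps)
  qed
  have T3: "N ?T3 \<le> ennreal (R\<^sup>2)" "?T3 \<in> borel_measurable M"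
  proof -
    note C = coreB[where \<phi>="\<lambda>u. u" and r=c and a=a and b=b and w="\<lambda>u. (u - c) powr (\<alpha> - 2)"
      and g="\<lambda>u. (a - c) powr (H + \<alpha> - 1 - 1)" and G="R"]
    have h: "\<bar>(u - c) powr (\<alpha> - 2)\<bar> * \<bar>u - c\<bar> powr H \<le> (a - c) powr (H + \<alpha> - 1 - 1)" if "a < u" for u
    proof -
      have "\<bar>(u - c) powr (\<alpha> - 2)\<bar> * \<bar>u - c\<bar> powr H = (u - c) powr (\<alpha> - 2 + H)"
        using that c by (simp add: powr_add)
      also have "\<alpha> - 2 + H = H + \<alpha> - 1 - 1" by simp
      also have "(u - c) powr (H + \<alpha> - 1 - 1) \<le> (a - c) powr (H + \<alpha> - 1 - 1)"
        using that c H1 \<alpha>1 by (intro powr_mono2') auto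
      finally show ?thesis .
    qed
    have gi: "(\<integral>\<^sup>+u. ennreal ((a - c) powr (H + \<alpha> - 1 - 1)) * indicator {a<..<b} u \<partial>lborel) \<le> ennreal R"
    proof -
      have "(\<integral>\<^sup>+u. ennreal ((a - c) powr (H + \<alpha> - 1 - 1)) * indicator {a<..<b} u \<partial>lborel)
          = ennreal ((a - c) powr (H + \<alpha> - 1 - 1)) * ennreal (b - a)"
        using ab by (simp add: nn_integral_cmult_indicator)
      also have "\<dots> = ennreal ((a - c) powr (H + \<alpha> - 1 - 1) * (b - a))"
        using ab by (simp add: ennreal_mult)
      also have "(a - c) powr (H + \<alpha> - 1 - 1) * (b - a) \<le> D powr (H + \<alpha> - 1 - 1) * D"
        using c D ab H1 \<alpha>1 by (intro mult_mono powr_mono2') auto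
      also have "D powr (H + \<alpha> - 1 - 1) * D = R"
        using D powr_m1_mult[of D "H + \<alpha> - 1"] by (simp add: R_def)
      finally show ?thesis by (simp add: ennreal_leI)
    qed
    have C': "(\<integral>\<^sup>+\<omega>. ennreal ((LBINT u=a..b. (B (max 0 u) \<omega> - B c \<omega>) * (u - c) powr (\<alpha> - 2))\<^sup>2) \<partial>M) \<le> ennreal (R\<^sup>2)"
      "(\<lambda>\<omega>. LBINT u=a..b. (B (max 0 u) \<omega> - B c \<omega>) * (u - c) powr (\<alpha> - 2)) \<in> borel_measurable M"
      by (rule C; use c ab h gi R0 in \<open>auto\<close>)+
    then show "N ?T3 \<le> ennreal (R\<^sup>2)" "?T3 \<in> borel_measurable M" by (simp_all add: N_def F_def)
  qed
  have T1: "N ?T1 \<le> ennreal (R\<^sup>2)"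
  proof (rule Nbound)
    have "(b - c) powr (\<alpha> - 1) * (b - a) powr H \<le> D powr (\<alpha> - 1) * D powr H"
      using c D ab \<alpha>1 H0 by (intro mult_mono powr_mono2' powr_mono2) auto
    also have "\<dots> = R" by (simp add: R_def powr_add[symmetric] algebra_simps)
    finally show "\<bar>(b - c) powr (\<alpha> - 1)\<bar> * \<bar>b - a\<bar> powr H \<le> R" using ab by simp
  qed (use c ab in auto)
  have T2: "N ?T2 \<le> ennreal (R\<^sup>2)"
  proof (rule Nbound)
    have "(a - c) powr (-(1 - \<alpha>)) - (b - c) powr (-(1 - \<alpha>)) \<le> (1 - \<alpha>) * ((b - c) - (a - c)) * (a - c) powr (-(1 - \<alpha>) - 1)"
      using c ab \<alpha>1 by (intro powr_diff_le) auto
    moreover have "(b - c) powr (\<alpha> - 1) \<le> (a - c) powr (\<alpha> - 1)"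
      using c ab \<alpha>1 by (intro powr_mono2') auto
    ultimately have "\<bar>(b - c) powr (\<alpha> - 1) - (a - c) powr (\<alpha> - 1)\<bar> \<le> (1 - \<alpha>) * (b - a) * (a - c) powr (\<alpha> - 2)"
      by simp
    then have "\<bar>(b - c) powr (\<alpha> - 1) - (a - c) powr (\<alpha> - 1)\<bar> * (a - c) powr H \<le> (1 - \<alpha>) * (b - a) * (a - c) powr (\<alpha> - 2) * (a - c) powr H"
      by (rule mult_right_mono) simp
    then have "\<bar>(b - c) powr (\<alpha> - 1) - (a - c) powr (\<alpha> - 1)\<bar> * \<bar>a - c\<bar> powr H \<le> (1 - \<alpha>) * (b - a) * (a - c) powr (\<alpha> - 2) * (a - c) powr H"
      using c by simp
    also have "\<dots> = (1 - \<alpha>) * ((b - a) * (a - c) powr (H + \<alpha> - 1 - 1))"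
      using c by (simp add: powr_add[symmetric] algebra_simps)
    also have "\<dots> \<le> 1 * (D * D powr (H + \<alpha> - 1 - 1))"
      using c D ab \<alpha>1 \<alpha>0 H1 by (intro mult_mono powr_mono2') auto
    also have "\<dots> = R" using D powr_m1_mult[of D "H + \<alpha> - 1"] by (simp add: R_def mult.commute)
    finally show "\<bar>(b - c) powr (\<alpha> - 1) - (a - c) powr (\<alpha> - 1)\<bar> * \<bar>a - c\<bar> powr H \<le> R" .
  qed (use c ab in auto)
  have "N (\<lambda>\<omega>. fbm_X \<alpha> B b c \<omega> - fbm_X \<alpha> B a c \<omega>) = N (\<lambda>\<omega>. (?T1 \<omega> + ?T2 \<omega>) + ?T3 \<omega>)"
    by (rule N_cong_AE[OF eq])
  also have "\<dots> \<le> 2 * N (\<lambda>\<omega>. ?T1 \<omega> + ?T2 \<omega>) + 2 * N ?T3"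
    by (rule N_add) (use T3(2) in measurable)
  also have "N (\<lambda>\<omega>. ?T1 \<omega> + ?T2 \<omega>) \<le> 2 * N ?T1 + 2 * N ?T2"
    by (rule N_add) measurable
  finally have "N (\<lambda>\<omega>. fbm_X \<alpha> B b c \<omega> - fbm_X \<alpha> B a c \<omega>) \<le> 2 * (2 * N ?T1 + 2 * N ?T2) + 2 * N ?T3"
    by (simp add: add_right_mono mult_left_mono)
  also have "\<dots> \<le> 2 * (2 * ennreal (R\<^sup>2) + 2 * ennreal (R\<^sup>2)) + 2 * ennreal (R\<^sup>2)"
    using T1 T2 T3(1) by (intro add_mono mult_left_mono) auto
  also have "\<dots> = (2 * (2 + 2) + 2) * ennreal (R\<^sup>2)"
    by (simp only: distrib_right distrib_left mult.assoc)
  also have "\<dots> = ennreal (10 * R\<^sup>2)"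
    by (simp add: ennreal_mult)
  also have "R\<^sup>2 = D powr (2 * (H + \<alpha> - 1))" using D by (simp add: R_def sq_powr)
  finally show ?thesis .
qed


definition Kc :: real where
  "Kc = 1 + 1 / (H + \<alpha> - 1) + 1 / (1 - \<alpha>) + 2 / (1 - (H + \<alpha> - 1))"

lemma Kc_ge: "1 \<le> Kc" "1 / (H + \<alpha> - 1) \<le> Kc" "1 / (1 - \<alpha>) \<le> Kc" "1 / (H + \<alpha> - 1) + 2 / (1 - (H + \<alpha> - 1)) \<le> Kc"
proof -
  have a: "0 < 1 / (H + \<alpha> - 1)" "0 < 1 / (1 - \<alpha>)" "0 < 2 / (1 - (H + \<alpha> - 1))"
    using \<alpha>0 \<alpha>1 H1 by auto
  show "1 \<le> Kc" "1 / (H + \<alpha> - 1) \<le> Kc" "1 / (1 - \<alpha>) \<le> Kc" "1 / (H + \<alpha> - 1) + 2 / (1 - (H + \<alpha> - 1)) \<le> Kc"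
    using a unfolding Kc_def by linarith+
qed

lemma IIcoord:
  assumes c: "0 \<le> c" "c < d" "d < b" and D: "d - c \<le> D" "D \<le> b - d" "0 < D"
  shows "N (\<lambda>\<omega>. fbm_X \<alpha> B b c \<omega> - fbm_X \<alpha> B b d \<omega>) \<le> ennreal (28 * Kc\<^sup>2 * D powr (2 * (H + \<alpha> - 1)))"
proof -
  have g0: "0 < H + \<alpha> - 1" using \<alpha>0 by simp
  have g1: "H + \<alpha> - 1 < 1" using H1 \<alpha>1 by simp
  define R where "R = D powr (H + \<alpha> - 1)"
  have R0: "0 \<le> R" by (simp add: R_def)
  define \<delta> where "\<delta> = d - c"
  have \<delta>: "0 < \<delta>" "\<delta> \<le> D" using c D by (auto simp: \<delta>_def)
  have \<delta>R: "\<delta> powr (H + \<alpha> - 1) \<le> R"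
    unfolding R_def using \<delta> g0 by (intro powr_mono2) auto
  have cb: "c < b" and d0: "0 \<le> d" using c by auto
  define Fc where "Fc = (\<lambda>\<omega> u. (B (max 0 u) \<omega> - B c \<omega>) * (u - c) powr (\<alpha> - 2))"
  define Fd where "Fd = (\<lambda>\<omega> u. (B (max 0 u) \<omega> - B d \<omega>) * (u - d) powr (\<alpha> - 2))"
  define G4 where "G4 = (\<lambda>\<omega> u. (B (max 0 d) \<omega> - B c \<omega>) * (u - c) powr (\<alpha> - 2))"
  define G5 where "G5 = (\<lambda>\<omega> u. (B (max 0 u) \<omega> - B d \<omega>) * ((u - c) powr (\<alpha> - 2) - (u - d) powr (\<alpha> - 2)))"
  let ?T1 = "\<lambda>\<omega>. (b - c) powr (\<alpha> - 1) * (B d \<omega> - B c \<omega>)"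
  let ?T2 = "\<lambda>\<omega>. ((b - c) powr (\<alpha> - 1) - (b - d) powr (\<alpha> - 1)) * (B b \<omega> - B d \<omega>)"
  let ?T3 = "\<lambda>\<omega>. LBINT u=c..d. Fc \<omega> u"
  let ?T4 = "\<lambda>\<omega>. LBINT u=d..b. G4 \<omega> u"
  let ?T5 = "\<lambda>\<omega>. LBINT u=d..b. G5 \<omega> u"
  have T3: "N ?T3 \<le> ennreal ((Kc * R)\<^sup>2)" "?T3 \<in> borel_measurable M"
  proof -
    have "N ?T3 \<le> ennreal (((d - c) powr (H + \<alpha> - 1) / (H + \<alpha> - 1))\<^sup>2)"
      using Xint(3)[OF c(1) c(2)] by (simp add: Fc_def)
    also have "\<dots> \<le> ennreal ((Kc * R)\<^sup>2)"
    proof (intro ennreal_leI power_mono)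
      have "(d - c) powr (H + \<alpha> - 1) / (H + \<alpha> - 1) = (1 / (H + \<alpha> - 1)) * \<delta> powr (H + \<alpha> - 1)"
        by (simp add: \<delta>_def)
      also have "\<dots> \<le> Kc * R"
        using Kc_ge \<delta>R g0 by (intro mult_mono) auto
      finally show "(d - c) powr (H + \<alpha> - 1) / (H + \<alpha> - 1) \<le> Kc * R" .
    qed (use g0 in auto)
    finally show "N ?T3 \<le> ennreal ((Kc * R)\<^sup>2)" .
    show "?T3 \<in> borel_measurable M" using Xint(2)[OF c(1) c(2)] by (simp add: Fc_def)
  qed
  have T4: "N ?T4 \<le> ennreal ((Kc * R)\<^sup>2)" "?T4 \<in> borel_measurable M"
       "AE \<omega> in M. set_integrable lborel {d<..<b} (G4 \<omega>)"
  proof -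
    note C = coreB[where \<phi>="\<lambda>u. d" and r=c and a=d and b=b and w="\<lambda>u. (u - c) powr (\<alpha> - 2)"
      and g="\<lambda>u. (d - c) powr H * (u - c) powr (\<alpha> - 2)" and G="Kc * R"]
    have gi: "(\<integral>\<^sup>+u. ennreal ((d - c) powr H * (u - c) powr (\<alpha> - 2)) * indicator {d<..<b} u \<partial>lborel) \<le> ennreal (Kc * R)"
    proof -
      have "(\<integral>\<^sup>+u. ennreal ((d - c) powr H * (u - c) powr (\<alpha> - 2)) * indicator {d<..<b} u \<partial>lborel)
         = (\<integral>\<^sup>+u. ennreal ((d - c) powr H) * (ennreal ((u - c) powr (\<alpha> - 2)) * indicator {c + \<delta><..<b} u) \<partial>lborel)"
        by (intro nn_integral_cong) (simp add: ennreal_mult \<delta>_def mult.assoc)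
      also have "\<dots> = ennreal ((d - c) powr H) * (\<integral>\<^sup>+u. ennreal ((u - c) powr (\<alpha> - 2)) * indicator {c + \<delta><..<b} u \<partial>lborel)"
        by (rule nn_integral_cmult) measurable
      also have "(\<integral>\<^sup>+u. ennreal ((u - c) powr (\<alpha> - 2)) * indicator {c + \<delta><..<b} u \<partial>lborel)
          \<le> (\<integral>\<^sup>+u. ennreal ((u - c) powr (\<alpha> - 2)) * indicator {c + \<delta>..<b} u \<partial>lborel)"
        by (intro nn_integral_mono) (auto split: split_indicator)
      also have "\<dots> \<le> ennreal (\<delta> powr (\<alpha> - 1) / (1 - \<alpha>))"
        by (rule powr_int_tail) (use \<alpha>1 \<delta> in auto)
      finally have "(\<integral>\<^sup>+u. ennreal ((d - c) powr H * (u - c) powr (\<alpha> - 2)) * indicator {d<..<b} u \<partial>lborel)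
          \<le> ennreal ((d - c) powr H) * ennreal (\<delta> powr (\<alpha> - 1) / (1 - \<alpha>))"
        by (simp add: mult_left_mono)
      also have "\<dots> = ennreal (\<delta> powr H * (\<delta> powr (\<alpha> - 1) / (1 - \<alpha>)))"
        using \<alpha>1 by (subst ennreal_mult[symmetric]) (auto simp: \<delta>_def)
      also have "\<delta> powr H * (\<delta> powr (\<alpha> - 1) / (1 - \<alpha>)) = (1 / (1 - \<alpha>)) * \<delta> powr (H + \<alpha> - 1)"
        by (simp add: powr_add[symmetric] algebra_simps)
      also have "\<dots> \<le> Kc * R"
        using Kc_ge \<delta>R \<alpha>1 by (intro mult_mono) auto
      finally show ?thesis by (simp add: ennreal_leI)
    qed
    have gb: "\<bar>(u - c) powr (\<alpha> - 2)\<bar> * \<bar>d - c\<bar> powr H \<le> (d - c) powr H * (u - c) powr (\<alpha> - 2)" for u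
      using c by simp
    have gp: "0 < (d - c) powr H * (u - c) powr (\<alpha> - 2)" if "d < u" for u
      using c that by simp
    have KR: "0 \<le> Kc * R" using Kc_ge R0 by simp
    have C': "AE \<omega> in M. set_integrable lborel {d<..<b} (\<lambda>u. (B (max 0 d) \<omega> - B c \<omega>) * (u - c) powr (\<alpha> - 2))"
      "(\<lambda>\<omega>. LBINT u=d..b. (B (max 0 d) \<omega> - B c \<omega>) * (u - c) powr (\<alpha> - 2)) \<in> borel_measurable M"
      "(\<integral>\<^sup>+\<omega>. ennreal ((LBINT u=d..b. (B (max 0 d) \<omega> - B c \<omega>) * (u - c) powr (\<alpha> - 2))\<^sup>2) \<partial>M) \<le> ennreal ((Kc * R)\<^sup>2)"
      by (rule C; use c gi gb gp KR in \<open>auto\<close>)+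
    then show "N ?T4 \<le> ennreal ((Kc * R)\<^sup>2)" "?T4 \<in> borel_measurable M"
       "AE \<omega> in M. set_integrable lborel {d<..<b} (G4 \<omega>)"
      by (simp_all add: N_def G4_def)
  qed
  have T5: "N ?T5 \<le> ennreal ((Kc * R)\<^sup>2)" "?T5 \<in> borel_measurable M"
       "AE \<omega> in M. set_integrable lborel {d<..<b} (G5 \<omega>)"
  proof -
    define g where "g = (\<lambda>u. if u < d + \<delta> then (u - d) powr (H + \<alpha> - 1 - 1) else (2 - \<alpha>) * \<delta> * (u - d) powr (H + \<alpha> - 1 - 2))"
    have gm: "g \<in> borel_measurable borel" unfolding g_def by measurable
    note C = coreB[where \<phi>="\<lambda>u. u" and r=d and a=d and b=b and w="\<lambda>u. (u - c) powr (\<alpha> - 2) - (u - d) powr (\<alpha> - 2)"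
      and g=g and G="Kc * R"]
    have gp: "0 < g u" if "d < u" for u
      using that \<alpha>1 \<delta> by (simp add: g_def)
    have gb: "\<bar>(u - c) powr (\<alpha> - 2) - (u - d) powr (\<alpha> - 2)\<bar> * \<bar>u - d\<bar> powr H \<le> g u" if u: "d < u" for u
    proof -
      have "(u - c) powr (\<alpha> - 2) \<le> (u - d) powr (\<alpha> - 2)"
        using u c \<alpha>1 by (intro powr_mono2') auto
      then have ab: "\<bar>(u - c) powr (\<alpha> - 2) - (u - d) powr (\<alpha> - 2)\<bar> = (u - d) powr (\<alpha> - 2) - (u - c) powr (\<alpha> - 2)"
        by simp
      have ad: "\<bar>u - d\<bar> = u - d" using u by simp
      have e1: "(u - d) powr (\<alpha> - 2) * (u - d) powr H = (u - d) powr (H + \<alpha> - 1 - 1)"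
        by (simp add: powr_add[symmetric] algebra_simps)
      have b1: "\<bar>(u - c) powr (\<alpha> - 2) - (u - d) powr (\<alpha> - 2)\<bar> * \<bar>u - d\<bar> powr H \<le> (u - d) powr (H + \<alpha> - 1 - 1)"
      proof -
        have "\<bar>(u - c) powr (\<alpha> - 2) - (u - d) powr (\<alpha> - 2)\<bar> * \<bar>u - d\<bar> powr H \<le> (u - d) powr (\<alpha> - 2) * (u - d) powr H"
          unfolding ab ad using u c by (intro mult_right_mono) auto
        then show ?thesis using e1 by simp
      qed
      have b2: "\<bar>(u - c) powr (\<alpha> - 2) - (u - d) powr (\<alpha> - 2)\<bar> * \<bar>u - d\<bar> powr H \<le> (2 - \<alpha>) * \<delta> * (u - d) powr (H + \<alpha> - 1 - 2)"
      proof -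
        have "(u - d) powr (-(2 - \<alpha>)) - (u - c) powr (-(2 - \<alpha>)) \<le> (2 - \<alpha>) * ((u - c) - (u - d)) * (u - d) powr (-(2 - \<alpha>) - 1)"
          using u c \<alpha>1 by (intro powr_diff_le) auto
        then have "\<bar>(u - c) powr (\<alpha> - 2) - (u - d) powr (\<alpha> - 2)\<bar> \<le> (2 - \<alpha>) * \<delta> * (u - d) powr (\<alpha> - 3)"
          unfolding ab by (simp add: \<delta>_def)
        then have "\<bar>(u - c) powr (\<alpha> - 2) - (u - d) powr (\<alpha> - 2)\<bar> * (u - d) powr H \<le> (2 - \<alpha>) * \<delta> * (u - d) powr (\<alpha> - 3) * (u - d) powr H"
          by (rule mult_right_mono) simp
        also have "\<dots> = (2 - \<alpha>) * \<delta> * (u - d) powr (H + \<alpha> - 1 - 2)"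
          by (simp add: powr_add[symmetric] algebra_simps)
        finally show ?thesis using u by simp
      qed
      show ?thesis using b1 b2 by (simp add: g_def)
    qed
    have gi: "(\<integral>\<^sup>+u. ennreal (g u) * indicator {d<..<b} u \<partial>lborel) \<le> ennreal (Kc * R)"
    proof -
      have "(\<integral>\<^sup>+u. ennreal (g u) * indicator {d<..<b} u \<partial>lborel)
         \<le> (\<integral>\<^sup>+u. ennreal ((u - d) powr (H + \<alpha> - 1 - 1)) * indicator {d<..<d + \<delta>} u
              + ennreal ((2 - \<alpha>) * \<delta>) * (ennreal ((u - d) powr (H + \<alpha> - 1 - 2)) * indicator {d + \<delta>..<b} u) \<partial>lborel)"
      proof (intro nn_integral_mono)
        fix u show "ennreal (g u) * indicator {d<..<b} u \<le> ennreal ((u - d) powr (H + \<alpha> - 1 - 1)) * indicator {d<..<d + \<delta>} u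
              + ennreal ((2 - \<alpha>) * \<delta>) * (ennreal ((u - d) powr (H + \<alpha> - 1 - 2)) * indicator {d + \<delta>..<b} u)"
          using \<alpha>1 \<delta> by (auto simp: g_def ennreal_mult split: split_indicator)
      qed
      also have "\<dots> = (\<integral>\<^sup>+u. ennreal ((u - d) powr (H + \<alpha> - 1 - 1)) * indicator {d<..<d + \<delta>} u \<partial>lborel)
              + ennreal ((2 - \<alpha>) * \<delta>) * (\<integral>\<^sup>+u. ennreal ((u - d) powr (H + \<alpha> - 1 - 2)) * indicator {d + \<delta>..<b} u \<partial>lborel)"
        by (simp add: nn_integral_add nn_integral_cmult)
      also have "\<dots> \<le> ennreal (\<delta> powr (H + \<alpha> - 1) / (H + \<alpha> - 1)) + ennreal ((2 - \<alpha>) * \<delta>) * ennreal (\<delta> powr (H + \<alpha> - 1 - 1) / (1 - (H + \<alpha> - 1)))"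
      proof (intro add_mono mult_left_mono)
        show "(\<integral>\<^sup>+u. ennreal ((u - d) powr (H + \<alpha> - 1 - 1)) * indicator {d<..<d + \<delta>} u \<partial>lborel) \<le> ennreal (\<delta> powr (H + \<alpha> - 1) / (H + \<alpha> - 1))"
          using powr_int_0[OF g0, of d "d + \<delta>"] \<delta> by simp
        show "(\<integral>\<^sup>+u. ennreal ((u - d) powr (H + \<alpha> - 1 - 2)) * indicator {d + \<delta>..<b} u \<partial>lborel) \<le> ennreal (\<delta> powr (H + \<alpha> - 1 - 1) / (1 - (H + \<alpha> - 1)))"
          by (rule powr_int_tail) (use g1 \<delta> in auto)
      qed auto
      also have "\<dots> = ennreal (\<delta> powr (H + \<alpha> - 1) / (H + \<alpha> - 1) + (2 - \<alpha>) * \<delta> * (\<delta> powr (H + \<alpha> - 1 - 1) / (1 - (H + \<alpha> - 1))))"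
      proof -
        have q: "ennreal ((2 - \<alpha>) * \<delta>) * ennreal (\<delta> powr (H + \<alpha> - 1 - 1) / (1 - (H + \<alpha> - 1)))
            = ennreal ((2 - \<alpha>) * \<delta> * (\<delta> powr (H + \<alpha> - 1 - 1) / (1 - (H + \<alpha> - 1))))"
          by (rule ennreal_mult[symmetric]) (use \<alpha>1 \<delta> g1 in auto)
        show ?thesis unfolding q
          by (rule ennreal_plus[symmetric]) (use \<alpha>1 \<delta> g0 g1 in auto)
      qed
      also have "\<delta> powr (H + \<alpha> - 1) / (H + \<alpha> - 1) + (2 - \<alpha>) * \<delta> * (\<delta> powr (H + \<alpha> - 1 - 1) / (1 - (H + \<alpha> - 1)))
          = (1 / (H + \<alpha> - 1) + (2 - \<alpha>) / (1 - (H + \<alpha> - 1))) * \<delta> powr (H + \<alpha> - 1)"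
        using powr_m1_mult[OF \<delta>(1), of "H + \<alpha> - 1"] by (simp add: field_simps)
      also have "\<dots> \<le> Kc * R"
      proof (intro mult_mono)
        have "(2 - \<alpha>) / (1 - (H + \<alpha> - 1)) \<le> 2 / (1 - (H + \<alpha> - 1))"
          using g1 \<alpha>0 H1 by (intro divide_right_mono) auto
        then show "1 / (H + \<alpha> - 1) + (2 - \<alpha>) / (1 - (H + \<alpha> - 1)) \<le> Kc" using Kc_ge(4) by linarith
      qed (use \<delta>R Kc_ge in auto)
      finally show ?thesis by (simp add: ennreal_leI)
    qed
    have KR: "0 \<le> Kc * R" using Kc_ge R0 by simp
    have C': "AE \<omega> in M. set_integrable lborel {d<..<b} (\<lambda>u. (B (max 0 u) \<omega> - B d \<omega>) * ((u - c) powr (\<alpha> - 2) - (u - d) powr (\<alpha> - 2)))"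
      "(\<lambda>\<omega>. LBINT u=d..b. (B (max 0 u) \<omega> - B d \<omega>) * ((u - c) powr (\<alpha> - 2) - (u - d) powr (\<alpha> - 2))) \<in> borel_measurable M"
      "(\<integral>\<^sup>+\<omega>. ennreal ((LBINT u=d..b. (B (max 0 u) \<omega> - B d \<omega>) * ((u - c) powr (\<alpha> - 2) - (u - d) powr (\<alpha> - 2)))\<^sup>2) \<partial>M) \<le> ennreal ((Kc * R)\<^sup>2)"
      by (rule C; use c gi gb gp KR gm in \<open>auto\<close>)+
    then show "N ?T5 \<le> ennreal ((Kc * R)\<^sup>2)" "?T5 \<in> borel_measurable M"
       "AE \<omega> in M. set_integrable lborel {d<..<b} (G5 \<omega>)"
      by (simp_all add: N_def G5_def)
  qed
  have KR1: "R \<le> Kc * R" using Kc_ge R0 by (simp add: mult_le_cancel_right1)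
  have T1: "N ?T1 \<le> ennreal ((Kc * R)\<^sup>2)"
  proof (rule Nbound)
    have "(b - c) powr (\<alpha> - 1) * (d - c) powr H \<le> D powr (\<alpha> - 1) * D powr H"
      using c D \<alpha>1 H0 by (intro mult_mono powr_mono2' powr_mono2) auto
    also have "\<dots> = R" by (simp add: R_def powr_add[symmetric] algebra_simps)
    finally show "\<bar>(b - c) powr (\<alpha> - 1)\<bar> * \<bar>d - c\<bar> powr H \<le> Kc * R" using c KR1 by simp
  qed (use c in auto)
  have T2: "N ?T2 \<le> ennreal ((Kc * R)\<^sup>2)"
  proof (rule Nbound)
    have "(b - d) powr (-(1 - \<alpha>)) - (b - c) powr (-(1 - \<alpha>)) \<le> (1 - \<alpha>) * ((b - c) - (b - d)) * (b - d) powr (-(1 - \<alpha>) - 1)"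
      using c \<alpha>1 by (intro powr_diff_le) auto
    moreover have "(b - c) powr (\<alpha> - 1) \<le> (b - d) powr (\<alpha> - 1)"
      using c \<alpha>1 by (intro powr_mono2') auto
    ultimately have "\<bar>(b - c) powr (\<alpha> - 1) - (b - d) powr (\<alpha> - 1)\<bar> \<le> (1 - \<alpha>) * \<delta> * (b - d) powr (\<alpha> - 2)"
      by (simp add: \<delta>_def)
    then have "\<bar>(b - c) powr (\<alpha> - 1) - (b - d) powr (\<alpha> - 1)\<bar> * (b - d) powr H \<le> (1 - \<alpha>) * \<delta> * (b - d) powr (\<alpha> - 2) * (b - d) powr H"
      by (rule mult_right_mono) simp
    also have "\<dots> = (1 - \<alpha>) * (\<delta> * (b - d) powr (H + \<alpha> - 1 - 1))"
      using c by (simp add: powr_add[symmetric] algebra_simps)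
    also have "\<dots> \<le> 1 * (D * D powr (H + \<alpha> - 1 - 1))"
      using c D \<delta> \<alpha>1 \<alpha>0 H1 by (intro mult_mono powr_mono2') auto
    also have "\<dots> = R" using D powr_m1_mult[of D "H + \<alpha> - 1"] by (simp add: R_def mult.commute)
    finally show "\<bar>(b - c) powr (\<alpha> - 1) - (b - d) powr (\<alpha> - 1)\<bar> * \<bar>b - d\<bar> powr H \<le> Kc * R"
      using c KR1 by simp
  qed (use c in auto)
  have eq: "AE \<omega> in M. fbm_X \<alpha> B b c \<omega> - fbm_X \<alpha> B b d \<omega> = (?T1 \<omega> + ?T2 \<omega>) + (?T3 \<omega> + (?T4 \<omega> + ?T5 \<omega>))"
    using Xint(1)[OF c(1) cb] Xint(1)[OF d0 c(3)] T4(3) T5(3)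
  proof eventually_elim
    fix \<omega>
    assume ic: "set_integrable lborel {c<..<b} (\<lambda>u. (B (max 0 u) \<omega> - B c \<omega>) * (u - c) powr (\<alpha> - 2))"
      and id: "set_integrable lborel {d<..<b} (\<lambda>u. (B (max 0 u) \<omega> - B d \<omega>) * (u - d) powr (\<alpha> - 2))"
      and i4: "set_integrable lborel {d<..<b} (G4 \<omega>)" and i5: "set_integrable lborel {d<..<b} (G5 \<omega>)"
    have S1: "(LBINT u=c..d. Fc \<omega> u) + (LBINT u=d..b. Fc \<omega> u) = (LBINT u=c..b. Fc \<omega> u)"
      by (rule interval_integral_sum) (use ic c in \<open>simp add: Fc_def interval_lebesgue_integrable_def min_def max_def\<close>)
    have id': "interval_lebesgue_integrable lborel (ereal d) (ereal b) (Fd \<omega>)"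
      using id c by (simp add: Fd_def interval_lebesgue_integrable_def)
    have i4': "interval_lebesgue_integrable lborel (ereal d) (ereal b) (G4 \<omega>)"
      using i4 c by (simp add: interval_lebesgue_integrable_def)
    have i5': "interval_lebesgue_integrable lborel (ereal d) (ereal b) (G5 \<omega>)"
      using i5 c by (simp add: interval_lebesgue_integrable_def)
    have pw: "Fc \<omega> = (\<lambda>u. Fd \<omega> u + (G4 \<omega> u + G5 \<omega> u))"
      using d0 by (auto simp: Fc_def Fd_def G4_def G5_def algebra_simps)
    have S2: "(LBINT u=d..b. Fc \<omega> u) = (LBINT u=d..b. Fd \<omega> u) + ((LBINT u=d..b. G4 \<omega> u) + (LBINT u=d..b. G5 \<omega> u))"
    proof -
      have "(LBINT u=d..b. Fc \<omega> u) = (LBINT u=d..b. Fd \<omega> u + (G4 \<omega> u + G5 \<omega> u))"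
        by (subst pw) simp
      also have "\<dots> = (LBINT u=d..b. Fd \<omega> u) + (LBINT u=d..b. G4 \<omega> u + G5 \<omega> u)"
        by (rule interval_lebesgue_integral_add(2)[OF id']) (use i4' i5' in auto)
      also have "(LBINT u=d..b. G4 \<omega> u + G5 \<omega> u) = (LBINT u=d..b. G4 \<omega> u) + (LBINT u=d..b. G5 \<omega> u)"
        by (rule interval_lebesgue_integral_add(2)[OF i4' i5'])
      finally show ?thesis .
    qed
    have X1: "fbm_X \<alpha> B b c \<omega> = (b - c) powr (\<alpha> - 1) * (B b \<omega> - B c \<omega>) + (LBINT u=c..b. Fc \<omega> u)"
      unfolding Xalt[OF c(1) cb] Fc_def ..
    have X2: "fbm_X \<alpha> B b d \<omega> = (b - d) powr (\<alpha> - 1) * (B b \<omega> - B d \<omega>) + (LBINT u=d..b. Fd \<omega> u)"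
      unfolding Xalt[OF d0 c(3)] Fd_def ..
    show "fbm_X \<alpha> B b c \<omega> - fbm_X \<alpha> B b d \<omega> = (?T1 \<omega> + ?T2 \<omega>) + (?T3 \<omega> + (?T4 \<omega> + ?T5 \<omega>))"
      unfolding X1 X2 S1[symmetric] S2 by (simp add: algebra_simps)
  qed
  have "N (\<lambda>\<omega>. fbm_X \<alpha> B b c \<omega> - fbm_X \<alpha> B b d \<omega>) = N (\<lambda>\<omega>. (?T1 \<omega> + ?T2 \<omega>) + (?T3 \<omega> + (?T4 \<omega> + ?T5 \<omega>)))"
    by (rule N_cong_AE[OF eq])
  also have "\<dots> \<le> 2 * N (\<lambda>\<omega>. ?T1 \<omega> + ?T2 \<omega>) + 2 * N (\<lambda>\<omega>. ?T3 \<omega> + (?T4 \<omega> + ?T5 \<omega>))"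
    by (rule N_add) (use T3(2) T4(2) T5(2) in measurable)
  also have "N (\<lambda>\<omega>. ?T1 \<omega> + ?T2 \<omega>) \<le> 2 * N ?T1 + 2 * N ?T2"
    by (rule N_add) measurable
  also have "N (\<lambda>\<omega>. ?T3 \<omega> + (?T4 \<omega> + ?T5 \<omega>)) \<le> 2 * N ?T3 + 2 * N (\<lambda>\<omega>. ?T4 \<omega> + ?T5 \<omega>)"
    by (rule N_add) (use T3(2) T4(2) T5(2) in measurable)
  also have "N (\<lambda>\<omega>. ?T4 \<omega> + ?T5 \<omega>) \<le> 2 * N ?T4 + 2 * N ?T5"
    by (rule N_add) (use T4(2) T5(2) in measurable)
  finally have "N (\<lambda>\<omega>. fbm_X \<alpha> B b c \<omega> - fbm_X \<alpha> B b d \<omega>) \<le> 2 * (2 * N ?T1 + 2 * N ?T2) + 2 * (2 * N ?T3 + 2 * (2 * N ?T4 + 2 * N ?T5))"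
    by (simp add: add_mono mult_left_mono)
  also have "\<dots> \<le> 2 * (2 * ennreal ((Kc * R)\<^sup>2) + 2 * ennreal ((Kc * R)\<^sup>2)) + 2 * (2 * ennreal ((Kc * R)\<^sup>2) + 2 * (2 * ennreal ((Kc * R)\<^sup>2) + 2 * ennreal ((Kc * R)\<^sup>2)))"
    using T1 T2 T3(1) T4(1) T5(1) by (intro add_mono mult_left_mono) auto
  also have "\<dots> = (2 * (2 + 2) + 2 * (2 + 2 * (2 + 2))) * ennreal ((Kc * R)\<^sup>2)"
    by (simp only: distrib_right distrib_left mult.assoc)
  also have "\<dots> = ennreal (28 * (Kc * R)\<^sup>2)"
    by (simp add: ennreal_mult)
  also have "28 * (Kc * R)\<^sup>2 = 28 * Kc\<^sup>2 * D powr (2 * (H + \<alpha> - 1))"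
    using D by (simp add: R_def sq_powr power_mult_distrib)
  finally show ?thesis .
qed


lemma N_uminus: "N (\<lambda>\<omega>. - Y \<omega>) = N Y"
  by (simp add: N_def)

lemma N_diff:
  assumes [measurable]: "Y \<in> borel_measurable M" "Z \<in> borel_measurable M"
  shows "N (\<lambda>\<omega>. Y \<omega> - Z \<omega>) \<le> 2 * N Y + 2 * N Z"
proof -
  have "N (\<lambda>\<omega>. Y \<omega> + (- Z \<omega>)) \<le> 2 * N Y + 2 * N (\<lambda>\<omega>. - Z \<omega>)"
    by (rule N_add) measurable
  then show ?thesis by (simp add: N_uminus)
qed

lemma P2:
  assumes t: "0 \<le> t2" "t2 < t1" and s: "0 \<le> s2" "s2 < s1"
  shows "N (\<lambda>\<omega>. fbm_X \<alpha> B t1 t2 \<omega> - fbm_X \<alpha> B s1 s2 \<omega>)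
     \<le> ennreal ((100 * (2 + 2 / (H + \<alpha> - 1)\<^sup>2) + 20 + 56 * Kc\<^sup>2) * (max \<bar>t1 - s1\<bar> \<bar>t2 - s2\<bar>) powr (2 * (H + \<alpha> - 1)))"
proof -
  define D where "D = max \<bar>t1 - s1\<bar> \<bar>t2 - s2\<bar>"
  define K0 where "K0 = 2 + 2 / (H + \<alpha> - 1)\<^sup>2"
  define P where "P = D powr (2 * (H + \<alpha> - 1))"
  have g0: "0 < H + \<alpha> - 1" using \<alpha>0 by simp
  have K00: "0 \<le> K0" by (simp add: K0_def)
  have P0: "0 \<le> P" by (simp add: P_def)
  have Kc0: "0 \<le> Kc\<^sup>2" by simp
  have D1: "\<bar>t1 - s1\<bar> \<le> D" "\<bar>t2 - s2\<bar> \<le> D" by (auto simp: D_def)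
  show ?thesis
  proof (cases "D = 0")
    case True
    then have "t1 = s1" "t2 = s2" using D1 by auto
    then show ?thesis by (simp add: N_def)
  next
    case False
    then have Dp: "0 < D" by (simp add: D_def)
    have goal: "N (\<lambda>\<omega>. fbm_X \<alpha> B t1 t2 \<omega> - fbm_X \<alpha> B s1 s2 \<omega>) \<le> ennreal ((100 * K0 + 20 + 56 * Kc\<^sup>2) * P)"
    proof (cases "t1 - t2 \<le> 3 * D \<or> s1 - s2 \<le> 3 * D")
      case True
      then have L: "t1 - t2 \<le> 5 * D" "s1 - s2 \<le> 5 * D" using D1 by auto
      have Lb: "ennreal (K0 * L powr (2 * (H + \<alpha> - 1))) \<le> ennreal (25 * K0 * P)" if "0 < L" "L \<le> 5 * D" for L
      proof (rule ennreal_leI)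
        have "L powr (2 * (H + \<alpha> - 1)) \<le> (5 * D) powr (2 * (H + \<alpha> - 1))"
          using that g0 by (intro powr_mono2) auto
        also have "\<dots> = 5 powr (2 * (H + \<alpha> - 1)) * P" using Dp by (simp add: P_def powr_mult)
        also have "5 powr (2 * (H + \<alpha> - 1)) \<le> 5 powr 2"
          using H1 \<alpha>1 by (intro powr_mono) auto
        finally have "L powr (2 * (H + \<alpha> - 1)) \<le> 25 * P"
          using P0 by (simp add: mult_right_mono order_trans)
        then have "K0 * L powr (2 * (H + \<alpha> - 1)) \<le> K0 * (25 * P)"
          using K00 by (rule mult_left_mono)
        then show "K0 * L powr (2 * (H + \<alpha> - 1)) \<le> 25 * K0 * P"
          by (simp add: algebra_simps)
      qed
      have "N (\<lambda>\<omega>. fbm_X \<alpha> B t1 t2 \<omega> - fbm_X \<alpha> B s1 s2 \<omega>) \<le> 2 * N (fbm_X \<alpha> B t1 t2) + 2 * N (fbm_X \<alpha> B s1 s2)"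
        using N_diff[OF Xm[OF t] Xm[OF s]] by simp
      also have "\<dots> \<le> 2 * ennreal (25 * K0 * P) + 2 * ennreal (25 * K0 * P)"
      proof (intro add_mono mult_left_mono)
        show "N (fbm_X \<alpha> B t1 t2) \<le> ennreal (25 * K0 * P)"
          using P1[OF t] Lb[of "t1 - t2"] t L by (simp add: K0_def)
        show "N (fbm_X \<alpha> B s1 s2) \<le> ennreal (25 * K0 * P)"
          using P1[OF s] Lb[of "s1 - s2"] s L by (simp add: K0_def)
      qed auto
      also have "\<dots> = ennreal (100 * K0 * P)"
        using K00 P0 by (subst ennreal_2sum) auto
      also have "\<dots> \<le> ennreal ((100 * K0 + 20 + 56 * Kc\<^sup>2) * P)"
        using K00 P0 Kc0 by (intro ennreal_leI) (simp add: algebra_simps)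
      finally show ?thesis .
    next
      case False
      then have far: "3 * D < t1 - t2" "3 * D < s1 - s2" by auto
      have m: "0 \<le> t2" "t2 < s1" using t s far D1 by auto
      have NI: "N (\<lambda>\<omega>. fbm_X \<alpha> B t1 t2 \<omega> - fbm_X \<alpha> B s1 t2 \<omega>) \<le> ennreal (10 * P)"
      proof (cases "t1 \<le> s1")
        case True
        have "N (\<lambda>\<omega>. fbm_X \<alpha> B s1 t2 \<omega> - fbm_X \<alpha> B t1 t2 \<omega>) \<le> ennreal (10 * P)"
          unfolding P_def by (rule Icoord) (use t True D1 far Dp in auto)
        moreover have "N (\<lambda>\<omega>. fbm_X \<alpha> B t1 t2 \<omega> - fbm_X \<alpha> B s1 t2 \<omega>) = N (\<lambda>\<omega>. fbm_X \<alpha> B s1 t2 \<omega> - fbm_X \<alpha> B t1 t2 \<omega>)"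
          by (rule N_minus_commute)
        ultimately show ?thesis by simp
      next
        case False
        show ?thesis
          unfolding P_def by (rule Icoord) (use t s False D1 far Dp in auto)
      qed
      have NII: "N (\<lambda>\<omega>. fbm_X \<alpha> B s1 t2 \<omega> - fbm_X \<alpha> B s1 s2 \<omega>) \<le> ennreal (28 * Kc\<^sup>2 * P)"
      proof (cases t2 s2 rule: linorder_cases)
        case less
        show ?thesis
          unfolding P_def by (rule IIcoord) (use t s less D1 far Dp in auto)
      next
        case equal then show ?thesis by (simp add: N_def)
      next
        case greater
        have "N (\<lambda>\<omega>. fbm_X \<alpha> B s1 s2 \<omega> - fbm_X \<alpha> B s1 t2 \<omega>) \<le> ennreal (28 * Kc\<^sup>2 * P)"
          unfolding P_def by (rule IIcoord) (use t s greater D1 far Dp in auto)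
        moreover have "N (\<lambda>\<omega>. fbm_X \<alpha> B s1 t2 \<omega> - fbm_X \<alpha> B s1 s2 \<omega>) = N (\<lambda>\<omega>. fbm_X \<alpha> B s1 s2 \<omega> - fbm_X \<alpha> B s1 t2 \<omega>)"
          by (rule N_minus_commute)
        ultimately show ?thesis by simp
      qed
      have "N (\<lambda>\<omega>. fbm_X \<alpha> B t1 t2 \<omega> - fbm_X \<alpha> B s1 s2 \<omega>)
          = N (\<lambda>\<omega>. (fbm_X \<alpha> B t1 t2 \<omega> - fbm_X \<alpha> B s1 t2 \<omega>) + (fbm_X \<alpha> B s1 t2 \<omega> - fbm_X \<alpha> B s1 s2 \<omega>))"
        by (simp add: N_def)
      also have "\<dots> \<le> 2 * N (\<lambda>\<omega>. fbm_X \<alpha> B t1 t2 \<omega> - fbm_X \<alpha> B s1 t2 \<omega>) + 2 * N (\<lambda>\<omega>. fbm_X \<alpha> B s1 t2 \<omega> - fbm_X \<alpha> B s1 s2 \<omega>)"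
        by (rule N_add) (use Xm[OF t] Xm[OF s] Xm[OF m] in measurable)
      also have "\<dots> \<le> 2 * ennreal (10 * P) + 2 * ennreal (28 * Kc\<^sup>2 * P)"
        using NI NII by (intro add_mono mult_left_mono) auto
      also have "\<dots> = ennreal (2 * (10 * P) + 2 * (28 * Kc\<^sup>2 * P))"
        using P0 by (subst ennreal_2sum) auto
      also have "\<dots> \<le> ennreal ((100 * K0 + 20 + 56 * Kc\<^sup>2) * P)"
        using K00 P0 Kc0 by (intro ennreal_leI) (simp add: algebra_simps)
      finally show ?thesis .
    qed
    then show ?thesis by (simp add: D_def K0_def P_def)
  qed
qed

end


lemma final_bound:
  fixes K D T e1 e2 :: real
  assumes "0 \<le> K" "0 \<le> D" "D \<le> T" "0 < e2" "0 \<le> e1" "1 \<le> k"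
  shows "K * D powr (2 * (e1 + e2)) \<le> (sqrt K * k * D powr e1 * T powr e2)\<^sup>2"
proof (cases "D = 0")
  case True then show ?thesis using assms by simp
next
  case False
  then have D: "0 < D" using assms by simp
  have "D powr (e1 + e2) = D powr e1 * D powr e2" by (simp add: powr_add)
  also have "\<dots> \<le> D powr e1 * T powr e2"
    using assms D by (intro mult_left_mono powr_mono2) auto
  also have "\<dots> \<le> k * (D powr e1 * T powr e2)"
  proof -
    have "0 \<le> D powr e1 * T powr e2" by simp
    then have "1 * (D powr e1 * T powr e2) \<le> k * (D powr e1 * T powr e2)"
      using assms by (intro mult_right_mono) auto
    then show ?thesis by simp
  qed
  finally have 1: "D powr (e1 + e2) \<le> k * D powr e1 * T powr e2" by (simp add: mult.assoc)
  have "K * D powr (2 * (e1 + e2)) = (sqrt K * D powr (e1 + e2))\<^sup>2"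
    using assms D by (simp add: power_mult_distrib sq_powr)
  also have "\<dots> \<le> (sqrt K * (k * D powr e1 * T powr e2))\<^sup>2"
    using 1 assms by (intro power_mono mult_left_mono) auto
  finally show ?thesis by (simp add: mult.assoc)
qed

theorem lemmaA2:
  fixes H \<alpha> :: real
  assumes "0 < H" "H < 1" "1 - H < \<alpha>" "\<alpha> < 1"
  shows
   "(\<exists>C. \<forall>(M::'a measure) B. fbm M H B \<longrightarrow>
       (\<forall>t1 t2. 0 \<le> t2 \<and> t2 < t1 \<longrightarrow>
          (\<integral>\<^sup>+\<omega>. ennreal ((fbm_X \<alpha> B t1 t2 \<omega>)\<^sup>2) \<partial>M)
            \<le> ennreal ((C * (t1 - t2) powr (H + \<alpha> - 1))\<^sup>2)))
    \<and> (H + \<alpha> \<le> 3/2 \<longrightarrow>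
       (\<exists>C. \<forall>(M::'a measure) B. fbm M H B \<longrightarrow>
         (\<forall>t1 t2 s1 s2 \<epsilon>. 0 \<le> t2 \<and> t2 < t1 \<and> 0 \<le> s2 \<and> s2 < s1 \<and>
            0 < \<epsilon> \<and> \<epsilon> < min (H + \<alpha> - 1) (1/2) \<longrightarrow>
            (\<integral>\<^sup>+\<omega>. ennreal ((fbm_X \<alpha> B t1 t2 \<omega> - fbm_X \<alpha> B s1 s2 \<omega>)\<^sup>2) \<partial>M)
              \<le> ennreal ((C * (1 + 1/\<epsilon>) * (max \<bar>t1 - s1\<bar> \<bar>t2 - s2\<bar>) powr (H + \<alpha> - 1 - \<epsilon>)
                          * (max t1 s1) powr \<epsilon>)\<^sup>2))))
    \<and> (H + \<alpha> > 3/2 \<longrightarrow>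
       (\<exists>C. \<forall>(M::'a measure) B. fbm M H B \<longrightarrow>
         (\<forall>t1 t2 s1 s2. 0 \<le> t2 \<and> t2 < t1 \<and> 0 \<le> s2 \<and> s2 < s1 \<longrightarrow>
            (\<integral>\<^sup>+\<omega>. ennreal ((fbm_X \<alpha> B t1 t2 \<omega> - fbm_X \<alpha> B s1 s2 \<omega>)\<^sup>2) \<partial>M)
              \<le> ennreal ((C * (max \<bar>t1 - s1\<bar> \<bar>t2 - s2\<bar>) powr (1/2)
                          * (max t1 s1) powr (H + \<alpha> - 3/2))\<^sup>2))))"
proof -
  define g where "g = H + \<alpha> - 1"
  define Kcv where "Kcv = 1 + 1 / g + 1 / (1 - \<alpha>) + 2 / (1 - g)"
  define K0 where "K0 = 2 + 2 / g\<^sup>2"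
  define KT where "KT = 100 * K0 + 20 + 56 * Kcv\<^sup>2"
  have g0: "0 < g" using assms by (simp add: g_def)
  have K00: "0 \<le> K0" by (simp add: K0_def)
  have KT0: "0 \<le> KT" using K00 by (simp add: KT_def)
  have loc: "fbm_ctx M H \<alpha> B" if "fbm M H B" for M :: "'a measure" and B
    using that assms by unfold_locales auto
  have part1: "\<exists>C. \<forall>(M::'a measure) B. fbm M H B \<longrightarrow>
       (\<forall>t1 t2. 0 \<le> t2 \<and> t2 < t1 \<longrightarrow>
          (\<integral>\<^sup>+\<omega>. ennreal ((fbm_X \<alpha> B t1 t2 \<omega>)\<^sup>2) \<partial>M)
            \<le> ennreal ((C * (t1 - t2) powr (H + \<alpha> - 1))\<^sup>2))"
  proof (intro exI allI impI, elim conjE)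
    fix M :: "'a measure" and B and t1 t2 :: real assume fb: "fbm M H B" and t: "0 \<le> t2" "t2 < t1"
    interpret I: fbm_ctx M H \<alpha> B using loc[OF fb] .
    have "(\<integral>\<^sup>+\<omega>. ennreal ((fbm_X \<alpha> B t1 t2 \<omega>)\<^sup>2) \<partial>M) \<le> ennreal (K0 * (t1 - t2) powr (2 * g))"
      using I.P1[OF t] by (simp add: I.N_def K0_def g_def)
    also have "K0 * (t1 - t2) powr (2 * g) = (sqrt K0 * (t1 - t2) powr g)\<^sup>2"
      using K00 t by (simp add: power_mult_distrib sq_powr)
    finally show "(\<integral>\<^sup>+\<omega>. ennreal ((fbm_X \<alpha> B t1 t2 \<omega>)\<^sup>2) \<partial>M) \<le> ennreal ((sqrt K0 * (t1 - t2) powr (H + \<alpha> - 1))\<^sup>2)"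
      using t by (simp add: g_def ennreal_leI)
  qed
  have P2: "(\<integral>\<^sup>+\<omega>. ennreal ((fbm_X \<alpha> B t1 t2 \<omega> - fbm_X \<alpha> B s1 s2 \<omega>)\<^sup>2) \<partial>M)
      \<le> ennreal (KT * (max \<bar>t1 - s1\<bar> \<bar>t2 - s2\<bar>) powr (2 * g))"
    if fb: "fbm M H B" and t: "0 \<le> t2" "t2 < t1" and s: "0 \<le> s2" "s2 < s1"
    for M :: "'a measure" and B and t1 t2 s1 s2 :: real
  proof -
    interpret I: fbm_ctx M H \<alpha> B using loc[OF fb] .
    show ?thesis
      using I.P2[OF t s] by (simp add: I.N_def I.Kc_def KT_def K0_def Kcv_def g_def)
  qed
  have DT: "max \<bar>t1 - s1\<bar> \<bar>t2 - s2\<bar> \<le> max t1 s1" "0 \<le> max \<bar>t1 - s1\<bar> \<bar>t2 - s2\<bar>"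
    if "0 \<le> t2" "t2 < t1" "0 \<le> s2" "s2 < s1" for t1 t2 s1 s2 :: real
    using that by auto
  have part2a: "H + \<alpha> \<le> 3/2 \<longrightarrow>
       (\<exists>C. \<forall>(M::'a measure) B. fbm M H B \<longrightarrow>
         (\<forall>t1 t2 s1 s2 \<epsilon>. 0 \<le> t2 \<and> t2 < t1 \<and> 0 \<le> s2 \<and> s2 < s1 \<and>
            0 < \<epsilon> \<and> \<epsilon> < min (H + \<alpha> - 1) (1/2) \<longrightarrow>
            (\<integral>\<^sup>+\<omega>. ennreal ((fbm_X \<alpha> B t1 t2 \<omega> - fbm_X \<alpha> B s1 s2 \<omega>)\<^sup>2) \<partial>M)
              \<le> ennreal ((C * (1 + 1/\<epsilon>) * (max \<bar>t1 - s1\<bar> \<bar>t2 - s2\<bar>) powr (H + \<alpha> - 1 - \<epsilon>)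
                          * (max t1 s1) powr \<epsilon>)\<^sup>2)))"
  proof (intro impI exI[of _ "sqrt KT"] allI, elim conjE)
    fix M :: "'a measure" and B and t1 t2 s1 s2 \<epsilon> :: real
    assume fb: "fbm M H B" and t: "0 \<le> t2" "t2 < t1" and s: "0 \<le> s2" "s2 < s1"
      and e: "0 < \<epsilon>" "\<epsilon> < min (H + \<alpha> - 1) (1/2)"
    have "(\<integral>\<^sup>+\<omega>. ennreal ((fbm_X \<alpha> B t1 t2 \<omega> - fbm_X \<alpha> B s1 s2 \<omega>)\<^sup>2) \<partial>M)
      \<le> ennreal (KT * (max \<bar>t1 - s1\<bar> \<bar>t2 - s2\<bar>) powr (2 * ((g - \<epsilon>) + \<epsilon>)))"
      using P2[OF fb t s] by simp
    also have "\<dots> \<le> ennreal ((sqrt KT * (1 + 1/\<epsilon>) * (max \<bar>t1 - s1\<bar> \<bar>t2 - s2\<bar>) powr (g - \<epsilon>) * (max t1 s1) powr \<epsilon>)\<^sup>2)"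
      by (intro ennreal_leI final_bound) (use KT0 DT[OF t s] e in \<open>auto simp: g_def\<close>)
    finally show "(\<integral>\<^sup>+\<omega>. ennreal ((fbm_X \<alpha> B t1 t2 \<omega> - fbm_X \<alpha> B s1 s2 \<omega>)\<^sup>2) \<partial>M)
              \<le> ennreal ((sqrt KT * (1 + 1/\<epsilon>) * (max \<bar>t1 - s1\<bar> \<bar>t2 - s2\<bar>) powr (H + \<alpha> - 1 - \<epsilon>)
                          * (max t1 s1) powr \<epsilon>)\<^sup>2)"
      by (simp add: g_def)
  qed
  have part2b: "H + \<alpha> > 3/2 \<longrightarrow>
       (\<exists>C. \<forall>(M::'a measure) B. fbm M H B \<longrightarrow>
         (\<forall>t1 t2 s1 s2. 0 \<le> t2 \<and> t2 < t1 \<and> 0 \<le> s2 \<and> s2 < s1 \<longrightarrow>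
            (\<integral>\<^sup>+\<omega>. ennreal ((fbm_X \<alpha> B t1 t2 \<omega> - fbm_X \<alpha> B s1 s2 \<omega>)\<^sup>2) \<partial>M)
              \<le> ennreal ((C * (max \<bar>t1 - s1\<bar> \<bar>t2 - s2\<bar>) powr (1/2)
                          * (max t1 s1) powr (H + \<alpha> - 3/2))\<^sup>2)))"
  proof (intro impI exI[of _ "sqrt KT"] allI, elim conjE)
    fix M :: "'a measure" and B and t1 t2 s1 s2 :: real
    assume h: "H + \<alpha> > 3/2" and fb: "fbm M H B" and t: "0 \<le> t2" "t2 < t1" and s: "0 \<le> s2" "s2 < s1"
    have "(\<integral>\<^sup>+\<omega>. ennreal ((fbm_X \<alpha> B t1 t2 \<omega> - fbm_X \<alpha> B s1 s2 \<omega>)\<^sup>2) \<partial>M)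
      \<le> ennreal (KT * (max \<bar>t1 - s1\<bar> \<bar>t2 - s2\<bar>) powr (2 * (1/2 + (g - 1/2))))"
      using P2[OF fb t s] by simp
    also have "\<dots> \<le> ennreal ((sqrt KT * 1 * (max \<bar>t1 - s1\<bar> \<bar>t2 - s2\<bar>) powr (1/2) * (max t1 s1) powr (g - 1/2))\<^sup>2)"
      by (intro ennreal_leI final_bound) (use KT0 DT[OF t s] h in \<open>auto simp: g_def\<close>)
    finally show "(\<integral>\<^sup>+\<omega>. ennreal ((fbm_X \<alpha> B t1 t2 \<omega> - fbm_X \<alpha> B s1 s2 \<omega>)\<^sup>2) \<partial>M)
              \<le> ennreal ((sqrt KT * (max \<bar>t1 - s1\<bar> \<bar>t2 - s2\<bar>) powr (1/2)
                          * (max t1 s1) powr (H + \<alpha> - 3/2))\<^sup>2)"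
      by (simp add: g_def)
  qed
  show ?thesis using part1 part2a part2b by blast
qed

end
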